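(* Let $\mathbb K$ be algebraically closed of characteristic zero, $T$ a torus with Lie algebra $\mathfrak t$, $V$ a finite-dimensional $T$-module and $\mu:V\oplus V^*\to\mathfrak t^*$, $\mu(x,y)(\xi)=y(\xi\cdot x)$. Then $(T,V)$ is visible if and only if the closed $T$-orbits in $\mu^{-1}(0)$ are exactly the orbits $T\cdot(x,y)$, $(x,y)\in\mu^{-1}(0)$, such that $T\cdot x$ is closed in $V$ and $T\cdot y$ is closed in $V^*$.
   Context: $(T,V)$ is visible if there are finitely many $T$-orbits $T\cdot x\subseteq V$ with $0\in\overline{T\cdot x}$. *)

theory Defs
  imports "HOL-Computational_Algebra.Polynomial"
begin

definition algebraically_closed :: "'a::field itself \<Rightarrow> bool" where
  "algebraically_closed _ \<longleftrightarrow> (\<forall>p::'a poly. degree p > 0 \<longrightarrow> (\<exists>x. poly p x = 0))"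

definition aspace :: "nat \<Rightarrow> (nat \<Rightarrow> 'a::zero) set" where
  "aspace m = {x. \<forall>i\<ge>m. x i = 0}"

inductive poly_fun :: "nat \<Rightarrow> ((nat \<Rightarrow> 'a::comm_ring_1) \<Rightarrow> 'a) \<Rightarrow> bool" for m where
  pf_const: "poly_fun m (\<lambda>x. c)"
| pf_var: "i < m \<Longrightarrow> poly_fun m (\<lambda>x. x i)"
| pf_add: "poly_fun m f \<Longrightarrow> poly_fun m g \<Longrightarrow> poly_fun m (\<lambda>x. f x + g x)"
| pf_mult: "poly_fun m f \<Longrightarrow> poly_fun m g \<Longrightarrow> poly_fun m (\<lambda>x. f x * g x)"

definition zariski_closed :: "nat \<Rightarrow> (nat \<Rightarrow> 'a::comm_ring_1) set \<Rightarrow> bool" where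
  "zariski_closed m S \<longleftrightarrow>
     (\<exists>F. (\<forall>f\<in>F. poly_fun m f) \<and> S = {x \<in> aspace m. \<forall>f\<in>F. f x = 0})"

definition zclosure :: "nat \<Rightarrow> (nat \<Rightarrow> 'a::comm_ring_1) set \<Rightarrow> (nat \<Rightarrow> 'a) set" where
  "zclosure m S = \<Inter>{C. zariski_closed m C \<and> S \<subseteq> C}"

definition torus :: "nat \<Rightarrow> (nat \<Rightarrow> 'a::field) set" where
  "torus r = {t. (\<forall>j<r. t j \<noteq> 0) \<and> (\<forall>j\<ge>r. t j = 1)}"

text \<open>A finite-dimensional T-module (diagonalised in a weight basis): K^m where T acts on the
  i-th coordinate by the character with exponent vector (w i 0, ..., w i (r-1)).\<close>
definition character :: "nat \<Rightarrow> (nat \<Rightarrow> int) \<Rightarrow> (nat \<Rightarrow> 'a::field) \<Rightarrow> 'a" where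
  "character r \<chi> t = (\<Prod>j<r. t j powi \<chi> j)"

definition tact :: "nat \<Rightarrow> nat \<Rightarrow> (nat \<Rightarrow> nat \<Rightarrow> int) \<Rightarrow> (nat \<Rightarrow> 'a::field) \<Rightarrow> (nat \<Rightarrow> 'a) \<Rightarrow> (nat \<Rightarrow> 'a)" where
  "tact m r w t x = (\<lambda>i. if i < m then character r (w i) t * x i else 0)"

definition torbit :: "nat \<Rightarrow> nat \<Rightarrow> (nat \<Rightarrow> nat \<Rightarrow> int) \<Rightarrow> (nat \<Rightarrow> 'a::field) \<Rightarrow> (nat \<Rightarrow> 'a) set" where
  "torbit m r w x = (\<lambda>t. tact m r w t x) ` torus r"

definition visible :: "nat \<Rightarrow> nat \<Rightarrow> (nat \<Rightarrow> nat \<Rightarrow> int) \<Rightarrow> 'a::field itself \<Rightarrow> bool" where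
  "visible m r w _ \<longleftrightarrow>
     finite {torbit m r w (x :: nat \<Rightarrow> 'a) | x. x \<in> aspace m \<and> (\<lambda>_. 0) \<in> zclosure m (torbit m r w x)}"

text \<open>Dual module V^*: dual basis, weights negated.\<close>
definition dual_weights :: "(nat \<Rightarrow> nat \<Rightarrow> int) \<Rightarrow> (nat \<Rightarrow> nat \<Rightarrow> int)" where
  "dual_weights w = (\<lambda>i j. - w i j)"

text \<open>V \<oplus> V^* as K^(2n): first n coordinates from V, next n from V^*.\<close>
definition pair_vec :: "nat \<Rightarrow> (nat \<Rightarrow> 'a::zero) \<Rightarrow> (nat \<Rightarrow> 'a) \<Rightarrow> (nat \<Rightarrow> 'a)" where
  "pair_vec n x y = (\<lambda>i. if i < n then x i else if i < 2 * n then y (i - n) else 0)"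

definition sum_weights :: "nat \<Rightarrow> (nat \<Rightarrow> nat \<Rightarrow> int) \<Rightarrow> (nat \<Rightarrow> nat \<Rightarrow> int)" where
  "sum_weights n w = (\<lambda>i. if i < n then w i else dual_weights w (i - n))"

definition lie_act :: "nat \<Rightarrow> nat \<Rightarrow> (nat \<Rightarrow> nat \<Rightarrow> int) \<Rightarrow> (nat \<Rightarrow> 'a::field) \<Rightarrow> (nat \<Rightarrow> 'a) \<Rightarrow> (nat \<Rightarrow> 'a)" where
  "lie_act n r w \<xi> x = (\<lambda>i. if i < n then (\<Sum>j<r. of_int (w i j) * \<xi> j) * x i else 0)"

text \<open>Moment map \<mu>(x,y)(\<xi>) = y(\<xi>\<cdot>x), using the dual basis pairing.\<close>
definition moment :: "nat \<Rightarrow> nat \<Rightarrow> (nat \<Rightarrow> nat \<Rightarrow> int) \<Rightarrow> (nat \<Rightarrow> 'a::field) \<Rightarrow> (nat \<Rightarrow> 'a) \<Rightarrow> (nat \<Rightarrow> 'a) \<Rightarrow> 'a" where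
  "moment n r w x y \<xi> = (\<Sum>i<n. y i * lie_act n r w \<xi> x i)"

definition moment_zero :: "nat \<Rightarrow> nat \<Rightarrow> (nat \<Rightarrow> nat \<Rightarrow> int) \<Rightarrow> ((nat \<Rightarrow> 'a::field) \<times> (nat \<Rightarrow> 'a)) set" where
  "moment_zero n r w = {(x, y). x \<in> aspace n \<and> y \<in> aspace n \<and>
      (\<forall>\<xi> \<in> aspace r. moment n r w x y \<xi> = 0)}"

end

theory Submission
  imports Defs "HOL-Library.Nat_Bijection"
begin


definition dotv :: "nat \<Rightarrow> (nat \<Rightarrow> 'a::comm_semiring_0) \<Rightarrow> (nat \<Rightarrow> 'a) \<Rightarrow> 'a" where
  "dotv r l v = (\<Sum>j<r. l j * v j)"

lemma mu_exists:
  fixes b :: "nat \<Rightarrow> 'f::linordered_field"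
  assumes "finite P" "finite N"
    and "\<And>p q. p \<in> P \<Longrightarrow> q \<in> N \<Longrightarrow> b p \<le> b q"
    and "\<And>p q. p \<in> P \<Longrightarrow> q \<in> N \<Longrightarrow> p \<in> E \<or> q \<in> E \<Longrightarrow> b p < b q"
  shows "\<exists>\<mu>. (\<forall>p\<in>P. b p \<le> \<mu> \<and> (p \<in> E \<longrightarrow> b p < \<mu>)) \<and> (\<forall>q\<in>N. \<mu> \<le> b q \<and> (q \<in> E \<longrightarrow> \<mu> < b q))"
proof (cases "P = {}")
  case True
  show ?thesis
  proof (cases "N = {}")
    case True
    with \<open>P = {}\<close> show ?thesis by auto
  next
    case False
    let ?m = "Min (b ` N) - 1"
    have "\<forall>q\<in>N. ?m < b q"
    proof
      fix q assume "q \<in> N"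
      then have "Min (b ` N) \<le> b q" using assms(2) by auto
      thus "?m < b q" by simp
    qed
    with True show ?thesis by (intro exI[of _ ?m]) auto
  qed
next
  case PF: False
  show ?thesis
  proof (cases "N = {}")
    case True
    let ?m = "Max (b ` P) + 1"
    have "\<forall>p\<in>P. b p < ?m"
    proof
      fix p assume "p \<in> P"
      then have "b p \<le> Max (b ` P)" using assms(1) by auto
      thus "b p < ?m" by simp
    qed
    with True show ?thesis by (intro exI[of _ ?m]) auto
  next
    case NF: False
    define L where "L = Max (b ` P)"
    define U where "U = Min (b ` N)"
    have "L \<in> b ` P" unfolding L_def using PF assms(1) by (intro Max_in) auto
    then obtain p0 where p0: "p0 \<in> P" "b p0 = L" by auto
    have "U \<in> b ` N" unfolding U_def using NF assms(2) by (intro Min_in) auto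
    then obtain q0 where q0: "q0 \<in> N" "b q0 = U" by auto
    have Lp: "\<forall>p\<in>P. b p \<le> L" unfolding L_def using assms(1) by auto
    have Uq: "\<forall>q\<in>N. U \<le> b q" unfolding U_def using assms(2) by auto
    have LU: "L \<le> U" using assms(3)[OF p0(1) q0(1)] p0 q0 by simp
    show ?thesis
    proof (intro exI[of _ "(L + U) / 2"] conjI ballI impI)
      fix p assume "p \<in> P" then have "b p \<le> L" using Lp by blast
      thus "b p \<le> (L + U) / 2" using LU by (simp add: field_simps)
    next
      fix p assume "p \<in> P" "p \<in> E"
      then have "b p < U" using assms(4)[OF _ q0(1)] q0 by auto
      moreover have "b p \<le> L" using Lp \<open>p \<in> P\<close> by blast
      ultimately show "b p < (L + U) / 2" by (simp add: field_simps)
    next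
      fix q assume "q \<in> N" then have "U \<le> b q" using Uq by blast
      thus "(L + U) / 2 \<le> b q" using LU by (simp add: field_simps)
    next
      fix q assume "q \<in> N" "q \<in> E"
      then have "L < b q" using assms(4)[OF p0(1)] p0 by auto
      moreover have "U \<le> b q" using Uq \<open>q \<in> N\<close> by blast
      ultimately show "(L + U) / 2 < b q" by (simp add: field_simps)
    qed
  qed
qed



lemma dotv_Suc: "dotv (Suc r) l v = dotv r l v + l r * v r"
  by (simp add: dotv_def)

lemma dotv_upd: "dotv r (l(r := m)) v = dotv r l v"
  by (simp add: dotv_def)

lemma dotv_lin: "dotv r l (\<lambda>j. a * v j + b * u j) = a * dotv r l v + b * dotv r l u"
  by (simp add: dotv_def sum.distrib sum_distrib_left algebra_simps)

definition fmv :: "nat \<Rightarrow> (nat \<Rightarrow> nat \<Rightarrow> 'f::linordered_field) \<Rightarrow> nat \<Rightarrow> nat \<Rightarrow> 'f" where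
  "fmv r v k = (if even k then v (k div 2) else
     (\<lambda>j. - v (snd (prod_decode (k div 2))) r * v (fst (prod_decode (k div 2))) j
          + v (fst (prod_decode (k div 2))) r * v (snd (prod_decode (k div 2))) j))"

definition f2 :: "nat \<times> nat \<Rightarrow> nat" where "f2 pq = 2 * prod_encode pq + 1"

lemma fmv_1: "fmv r v (2 * i) = v i" by (simp add: fmv_def)
lemma fmv_2: "fmv r v (f2 (p, q)) = (\<lambda>j. - v q r * v p j + v p r * v q j)"
  by (simp add: fmv_def f2_def)
lemma inj_f2: "inj f2" unfolding inj_def f2_def by (metis add_right_cancel mult_left_cancel zero_neq_numeral prod_encode_eq)
lemma inj_f1: "inj (\<lambda>i::nat. 2 * i)" by (simp add: inj_def)
lemma f12_disj: "2 * i \<noteq> f2 pq" unfolding f2_def by presburger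

lemma motzkin:
  fixes v :: "nat \<Rightarrow> nat \<Rightarrow> 'f::linordered_field"
  assumes "finite I" "E \<subseteq> I"
  shows "(\<exists>l. (\<forall>i\<in>I. dotv r l (v i) \<ge> 0) \<and> (\<forall>i\<in>E. dotv r l (v i) > 0)) \<or>
         (\<exists>a. (\<forall>i\<in>I. a i \<ge> 0) \<and> (\<exists>i\<in>E. a i > 0) \<and> (\<forall>j<r. (\<Sum>i\<in>I. a i * v i j) = 0))"
  using assms
proof (induction r arbitrary: I E v)
  case 0
  show ?case
  proof (cases "E = {}")
    case True thus ?thesis by (simp add: dotv_def)
  next
    case False
    then obtain e where "e \<in> E" by auto
    thus ?thesis by (intro disjI2 exI[of _ "\<lambda>_. 1"]) auto
  qed
next
  case (Suc r)
  define P where "P = {i\<in>I. v i r > 0}"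
  define N where "N = {i\<in>I. v i r < 0}"
  define Z where "Z = {i\<in>I. v i r = 0}"
  have fin: "finite P" "finite N" "finite Z" using Suc.prems(1) by (auto simp: P_def N_def Z_def)
  have IPNZ: "I = Z \<union> P \<union> N" by (auto simp: P_def N_def Z_def)
  have disj: "Z \<inter> P = {}" "Z \<inter> N = {}" "P \<inter> N = {}" by (auto simp: P_def N_def Z_def)
  define I' where "I' = (\<lambda>i. 2 * i) ` Z \<union> f2 ` (P \<times> N)"
  define E' where "E' = (\<lambda>i. 2 * i) ` (Z \<inter> E) \<union> f2 ` {pq \<in> P \<times> N. fst pq \<in> E \<or> snd pq \<in> E}"
  have finI': "finite I'" unfolding I'_def using fin by auto
  have EI': "E' \<subseteq> I'" unfolding E'_def I'_def by auto
  note IH = Suc.IH[OF finI' EI', of "fmv r v"]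
  show ?case
  proof (cases "\<exists>l. (\<forall>i\<in>I'. dotv r l (fmv r v i) \<ge> 0) \<and> (\<forall>i\<in>E'. dotv r l (fmv r v i) > 0)")
    case True
    then obtain l where l1: "\<forall>i\<in>I'. dotv r l (fmv r v i) \<ge> 0" and l2: "\<forall>i\<in>E'. dotv r l (fmv r v i) > 0" by blast
    define \<alpha> where "\<alpha> i = dotv r l (v i)" for i
    have hZ: "\<alpha> i \<ge> 0" if "i \<in> Z" for i
    proof -
      have "2 * i \<in> I'" using that unfolding I'_def by auto
      hence "dotv r l (fmv r v (2 * i)) \<ge> 0" using l1 by blast
      thus ?thesis by (simp add: fmv_1 \<alpha>_def)
    qed
    have hZE: "\<alpha> i > 0" if "i \<in> Z" "i \<in> E" for i
    proof -
      have "2 * i \<in> E'" using that unfolding E'_def by auto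
      hence "dotv r l (fmv r v (2 * i)) > 0" using l2 by blast
      thus ?thesis by (simp add: fmv_1 \<alpha>_def)
    qed
    have hPN: "- v q r * \<alpha> p + v p r * \<alpha> q \<ge> 0" if "p \<in> P" "q \<in> N" for p q
    proof -
      have "f2 (p, q) \<in> I'" using that unfolding I'_def by auto
      hence "dotv r l (fmv r v (f2 (p, q))) \<ge> 0" using l1 by blast
      thus ?thesis by (simp only: fmv_2 dotv_lin \<alpha>_def)
    qed
    have hPNE: "- v q r * \<alpha> p + v p r * \<alpha> q > 0" if "p \<in> P" "q \<in> N" "p \<in> E \<or> q \<in> E" for p q
    proof -
      have "f2 (p, q) \<in> E'" using that unfolding E'_def by auto
      hence "dotv r l (fmv r v (f2 (p, q))) > 0" using l2 by blast
      thus ?thesis by (simp only: fmv_2 dotv_lin \<alpha>_def)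
    qed
    define b where "b i = - \<alpha> i / v i r" for i
    have ble: "b p \<le> b q" if "p \<in> P" "q \<in> N" for p q
    proof -
      have a: "v p r > 0" "v q r < 0" using that by (auto simp: P_def N_def)
      have "- v q r * \<alpha> p + v p r * \<alpha> q \<ge> 0" using hPN that .
      thus ?thesis using a unfolding b_def by (simp add: field_simps)
    qed
    have blt: "b p < b q" if "p \<in> P" "q \<in> N" "p \<in> E \<or> q \<in> E" for p q
    proof -
      have a: "v p r > 0" "v q r < 0" using that by (auto simp: P_def N_def)
      have "- v q r * \<alpha> p + v p r * \<alpha> q > 0" using hPNE that .
      thus ?thesis using a unfolding b_def by (simp add: field_simps)
    qed
    obtain \<mu> where mu: "\<forall>p\<in>P. b p \<le> \<mu> \<and> (p \<in> E \<longrightarrow> b p < \<mu>)" "\<forall>q\<in>N. \<mu> \<le> b q \<and> (q \<in> E \<longrightarrow> \<mu> < b q)"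
      using mu_exists[of P N b E, OF fin(1,2) ble blt] by blast
    have val: "dotv (Suc r) (l(r := \<mu>)) (v i) = \<alpha> i + \<mu> * v i r" for i
      by (simp add: dotv_Suc dotv_upd \<alpha>_def)
    have ge: "\<alpha> i + \<mu> * v i r \<ge> 0 \<and> (i \<in> E \<longrightarrow> \<alpha> i + \<mu> * v i r > 0)" if "i \<in> I" for i
    proof -
      have "i \<in> Z \<or> i \<in> P \<or> i \<in> N" using that IPNZ by auto
      moreover
      { assume "i \<in> Z" hence ?thesis using hZ hZE by (simp add: Z_def) }
      moreover
      { assume iP: "i \<in> P"
        hence vp: "v i r > 0" by (simp add: P_def)
        have "b i \<le> \<mu>" "i \<in> E \<longrightarrow> b i < \<mu>" using mu(1) iP by auto
        hence ?thesis using vp unfolding b_def by (auto simp: field_simps) }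
      moreover
      { assume iN: "i \<in> N"
        hence vn: "v i r < 0" by (simp add: N_def)
        have "\<mu> \<le> b i" "i \<in> E \<longrightarrow> \<mu> < b i" using mu(2) iN by auto
        hence ?thesis using vn unfolding b_def by (auto simp: field_simps) }
      ultimately show ?thesis by blast
    qed
    show ?thesis
    proof (rule disjI1, rule exI[of _ "l(r := \<mu>)"], intro conjI ballI)
      fix i assume "i \<in> I" thus "dotv (Suc r) (l(r := \<mu>)) (v i) \<ge> 0" unfolding val using ge by blast
    next
      fix i assume "i \<in> E" thus "dotv (Suc r) (l(r := \<mu>)) (v i) > 0" unfolding val using ge Suc.prems(2) by blast
    qed
  next
    case False
    with IH obtain a' where a1: "\<forall>i\<in>I'. a' i \<ge> 0" and a2: "\<exists>i\<in>E'. a' i > 0"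
      and a3: "\<forall>j<r. (\<Sum>i\<in>I'. a' i * fmv r v i j) = 0" by blast
    define a where "a i = (if i \<in> Z then a' (2 * i)
        else if i \<in> P then (\<Sum>q\<in>N. a' (f2 (i, q)) * (- v q r))
        else if i \<in> N then (\<Sum>p\<in>P. a' (f2 (p, i)) * v p r) else 0)" for i
    have split: "(\<Sum>i\<in>I'. a' i * fmv r v i j) =
       (\<Sum>i\<in>Z. a' (2 * i) * v i j) + (\<Sum>pq\<in>P \<times> N. a' (f2 pq) * (- v (snd pq) r * v (fst pq) j + v (fst pq) r * v (snd pq) j))" for j
    proof -
      have d: "(\<lambda>i. 2 * i) ` Z \<inter> f2 ` (P \<times> N) = {}" using f12_disj by auto
      have "(\<Sum>i\<in>I'. a' i * fmv r v i j) = (\<Sum>i\<in>(\<lambda>i. 2 * i) ` Z. a' i * fmv r v i j) + (\<Sum>i\<in>f2 ` (P \<times> N). a' i * fmv r v i j)"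
        unfolding I'_def using fin d by (intro sum.union_disjoint) auto
      also have "(\<Sum>i\<in>(\<lambda>i. 2 * i) ` Z. a' i * fmv r v i j) = (\<Sum>i\<in>Z. a' (2 * i) * v i j)"
        by (subst sum.reindex) (auto simp: inj_on_def fmv_1)
      also have "(\<Sum>i\<in>f2 ` (P \<times> N). a' i * fmv r v i j) = (\<Sum>pq\<in>P \<times> N. a' (f2 pq) * (- v (snd pq) r * v (fst pq) j + v (fst pq) r * v (snd pq) j))"
        by (subst sum.reindex) (auto intro!: inj_on_subset[OF inj_f2] sum.cong simp: fmv_2 split: prod.splits)
      finally show ?thesis .
    qed
    have main: "(\<Sum>i\<in>I. a i * v i j) = (\<Sum>i\<in>I'. a' i * fmv r v i j)" for j
    proof -
      have e1: "(\<Sum>i\<in>I. a i * v i j) = (\<Sum>i\<in>Z. a i * v i j) + (\<Sum>i\<in>P. a i * v i j) + (\<Sum>i\<in>N. a i * v i j)"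
        unfolding IPNZ using fin disj by (simp add: sum.union_disjoint Int_Un_distrib2)
      have e2: "(\<Sum>i\<in>Z. a i * v i j) = (\<Sum>i\<in>Z. a' (2 * i) * v i j)" by (simp add: a_def)
      have e3: "(\<Sum>i\<in>P. a i * v i j) = (\<Sum>p\<in>P. \<Sum>q\<in>N. a' (f2 (p, q)) * (- v q r) * v p j)"
        using disj by (intro sum.cong) (auto simp: a_def sum_distrib_right)
      have e4: "(\<Sum>i\<in>N. a i * v i j) = (\<Sum>q\<in>N. \<Sum>p\<in>P. a' (f2 (p, q)) * v p r * v q j)"
        using disj by (intro sum.cong) (auto simp: a_def sum_distrib_right)
      have e5: "(\<Sum>q\<in>N. \<Sum>p\<in>P. a' (f2 (p, q)) * v p r * v q j) = (\<Sum>p\<in>P. \<Sum>q\<in>N. a' (f2 (p, q)) * v p r * v q j)" by (rule sum.swap)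
      have e6: "(\<Sum>p\<in>P. \<Sum>q\<in>N. a' (f2 (p, q)) * (- v q r) * v p j) + (\<Sum>p\<in>P. \<Sum>q\<in>N. a' (f2 (p, q)) * v p r * v q j)
          = (\<Sum>pq\<in>P \<times> N. a' (f2 pq) * (- v (snd pq) r * v (fst pq) j + v (fst pq) r * v (snd pq) j))"
        unfolding sum.cartesian_product' sum.distrib[symmetric]
        by (intro sum.cong refl) (simp add: algebra_simps)
      show ?thesis unfolding split[of j] e1 e2 e3 e4 e5 e6[symmetric] by (simp only: add.assoc)
    qed
    have nonneg: "\<forall>i\<in>I. a i \<ge> 0"
    proof
      fix i assume "i \<in> I"
      have "a' (f2 (p, q)) \<ge> 0" if "p \<in> P" "q \<in> N" for p q using a1 that unfolding I'_def by auto
      moreover have "a' (2 * i) \<ge> 0" if "i \<in> Z" using a1 that unfolding I'_def by auto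
      moreover have "v p r \<ge> 0" if "p \<in> P" for p using that by (auto simp: P_def)
      moreover have "v q r \<le> 0" if "q \<in> N" for q using that by (auto simp: N_def)
      ultimately show "a i \<ge> 0" unfolding a_def
        by (auto intro!: sum_nonneg mult_nonneg_nonneg simp: mult_nonneg_nonpos)
    qed
    have pos: "\<exists>i\<in>E. a i > 0"
    proof -
      obtain k where k: "k \<in> E'" "a' k > 0" using a2 by blast
      have nn: "a' (f2 (p, q)) \<ge> 0" if "p \<in> P" "q \<in> N" for p q using a1 that unfolding I'_def by auto
      show ?thesis
      proof (cases "k \<in> (\<lambda>i. 2 * i) ` (Z \<inter> E)")
        case True
        then obtain i where "i \<in> Z" "i \<in> E" "k = 2 * i" by auto
        thus ?thesis using k by (intro bexI[of _ i]) (auto simp: a_def)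
      next
        case False
        with k obtain p q where pq: "p \<in> P" "q \<in> N" "p \<in> E \<or> q \<in> E" "k = f2 (p, q)"
          unfolding E'_def by auto
        have vp: "v p r > 0" and vq: "v q r < 0" using pq by (auto simp: P_def N_def)
        have pnZ: "p \<notin> Z" "q \<notin> Z" "q \<notin> P" using pq disj by auto
        show ?thesis
        proof (cases "p \<in> E")
          case True
          have "a' (f2 (p, q)) * (- v q r) \<le> (\<Sum>q\<in>N. a' (f2 (p, q)) * (- v q r))"
          proof (rule member_le_sum)
            fix x assume "x \<in> N - {q}"
            hence "a' (f2 (p, x)) \<ge> 0" "v x r < 0" using nn pq by (auto simp: N_def)
            thus "a' (f2 (p, x)) * (- v x r) \<ge> 0" by (simp add: mult_nonneg_nonpos)
          qed (use fin pq in auto)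
          moreover have "a' (f2 (p, q)) * (- v q r) > 0" using k pq vq by (simp add: mult_pos_neg)
          ultimately show ?thesis using True pq pnZ by (intro bexI[of _ p]) (auto simp: a_def)
        next
          case False
          hence qE: "q \<in> E" using pq by auto
          have "a' (f2 (p, q)) * v p r \<le> (\<Sum>p\<in>P. a' (f2 (p, q)) * v p r)"
          proof (rule member_le_sum)
            fix x assume "x \<in> P - {p}"
            hence "a' (f2 (x, q)) \<ge> 0" "v x r > 0" using nn pq by (auto simp: P_def)
            thus "a' (f2 (x, q)) * v x r \<ge> 0" by simp
          qed (use fin pq in auto)
          moreover have "a' (f2 (p, q)) * v p r > 0" using k pq vp by simp
          ultimately show ?thesis using qE pq pnZ by (intro bexI[of _ q]) (auto simp: a_def)
        qed
      qed
    qed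
    have rel: "\<forall>j<Suc r. (\<Sum>i\<in>I. a i * v i j) = 0"
    proof (intro allI impI)
      fix j assume "j < Suc r"
      show "(\<Sum>i\<in>I. a i * v i j) = 0"
      proof (cases "j < r")
        case True thus ?thesis using main a3 by simp
      next
        case False
        hence "j = r" using \<open>j < Suc r\<close> by simp
        thus ?thesis using main split by (simp add: Z_def algebra_simps)
      qed
    qed
    show ?thesis using nonneg pos rel by blast
  qed
qed



lemma clear_denoms:
  fixes f :: "nat \<Rightarrow> rat"
  assumes "finite A"
  shows "\<exists>D::int. D > 0 \<and> (\<forall>i\<in>A. of_int D * f i \<in> \<int>)"
  using assms
proof (induction A rule: finite_induct)
  case empty thus ?case by (intro exI[of _ 1]) auto
next
  case (insert x A)
  then obtain D where D: "D > 0" "\<forall>i\<in>A. of_int D * f i \<in> \<int>" by blast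
  obtain a b where ab: "quotient_of (f x) = (a, b)" by fastforce
  have b: "b > 0" using quotient_of_denom_pos[OF ab] .
  have fx: "f x = of_int a / of_int b" using quotient_of_div[OF ab] .
  have "of_int b * f x = of_int a" using b fx by simp
  hence bx: "of_int b * f x \<in> \<int>" by simp
  show ?case
  proof (intro exI[of _ "D * b"] conjI ballI)
    show "D * b > 0" using D b by simp
  next
    fix i assume "i \<in> insert x A"
    then consider "i = x" | "i \<in> A" by auto
    thus "of_int (D * b) * f i \<in> \<int>"
    proof cases
      case 1
      have "of_int (D * b) * f i = of_int D * (of_int b * f x)" using 1 by simp
      thus ?thesis using bx by (metis Ints_mult Ints_of_int)
    next
      case 2
      have "of_int (D * b) * f i = of_int b * (of_int D * f i)" by simp
      thus ?thesis using D(2) 2 by (metis Ints_mult Ints_of_int)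
    qed
  qed
qed

lemma Ints_floor: "(x::rat) \<in> \<int> \<Longrightarrow> of_int \<lfloor>x\<rfloor> = x"
  by (metis Ints_cases floor_of_int)

lemma motzkin_int:
  fixes W :: "nat \<Rightarrow> nat \<Rightarrow> int"
  assumes "finite I" "E \<subseteq> I"
  shows "(\<exists>l::nat\<Rightarrow>int. (\<forall>i\<in>I. dotv r l (W i) \<ge> 0) \<and> (\<forall>i\<in>E. dotv r l (W i) > 0)) \<or>
         (\<exists>a::nat\<Rightarrow>int. (\<forall>i\<in>I. a i \<ge> 0) \<and> (\<exists>i\<in>E. a i > 0) \<and> (\<forall>j<r. (\<Sum>i\<in>I. a i * W i j) = 0))"
proof -
  define v :: "nat \<Rightarrow> nat \<Rightarrow> rat" where "v i j = of_int (W i j)" for i j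
  from motzkin[OF assms, of r v] show ?thesis
  proof
    assume "\<exists>l. (\<forall>i\<in>I. dotv r l (v i) \<ge> 0) \<and> (\<forall>i\<in>E. dotv r l (v i) > 0)"
    then obtain l where l: "\<forall>i\<in>I. dotv r l (v i) \<ge> 0" "\<forall>i\<in>E. dotv r l (v i) > 0" by blast
    obtain D where D: "D > 0" "\<forall>j\<in>{..<r}. of_int D * l j \<in> \<int>" using clear_denoms[of "{..<r}" l] by auto
    define l' where "l' j = \<lfloor>of_int D * l j\<rfloor>" for j
    have key: "of_int (dotv r l' (W i)) = of_int D * dotv r l (v i)" for i
    proof -
      have "of_int (dotv r l' (W i)) = (\<Sum>j<r. of_int (l' j) * (of_int (W i j) :: rat))"
        by (simp add: dotv_def)
      also have "\<dots> = (\<Sum>j<r. of_int D * l j * v i j)"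
        using D(2) by (intro sum.cong refl) (simp add: l'_def Ints_floor v_def)
      also have "\<dots> = of_int D * dotv r l (v i)" by (simp add: dotv_def sum_distrib_left mult.assoc)
      finally show ?thesis .
    qed
    have "\<forall>i\<in>I. dotv r l' (W i) \<ge> 0"
    proof
      fix i assume "i \<in> I"
      hence "of_int D * dotv r l (v i) \<ge> (0::rat)" using l D by simp
      hence "(of_int (dotv r l' (W i)) :: rat) \<ge> 0" using key by simp
      thus "dotv r l' (W i) \<ge> 0" by simp
    qed
    moreover have "\<forall>i\<in>E. dotv r l' (W i) > 0"
    proof
      fix i assume "i \<in> E"
      hence "of_int D * dotv r l (v i) > (0::rat)" using l D by simp
      hence "(of_int (dotv r l' (W i)) :: rat) > 0" using key by simp
      thus "dotv r l' (W i) > 0" by simp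
    qed
    ultimately show ?thesis by blast
  next
    assume "\<exists>a. (\<forall>i\<in>I. a i \<ge> 0) \<and> (\<exists>i\<in>E. a i > 0) \<and> (\<forall>j<r. (\<Sum>i\<in>I. a i * v i j) = 0)"
    then obtain a where a: "\<forall>i\<in>I. a i \<ge> 0" "\<exists>i\<in>E. a i > 0" "\<forall>j<r. (\<Sum>i\<in>I. a i * v i j) = 0" by blast
    obtain D where D: "D > 0" "\<forall>i\<in>I. of_int D * a i \<in> \<int>" using clear_denoms[OF assms(1), of a] by auto
    define a' where "a' i = \<lfloor>of_int D * a i\<rfloor>" for i
    have ka: "of_int (a' i) = of_int D * a i" if "i \<in> I" for i
      using D(2) that by (simp add: a'_def Ints_floor)
    have "\<forall>i\<in>I. a' i \<ge> 0"
    proof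
      fix i assume "i \<in> I"
      hence "(of_int (a' i) :: rat) \<ge> 0" using ka a D by simp
      thus "a' i \<ge> 0" by simp
    qed
    moreover have "\<exists>i\<in>E. a' i > 0"
    proof -
      obtain i where "i \<in> E" "a i > 0" using a by blast
      moreover have "i \<in> I" using \<open>i \<in> E\<close> assms(2) by auto
      ultimately have "(of_int (a' i) :: rat) > 0" using ka D by simp
      thus ?thesis using \<open>i \<in> E\<close> by auto
    qed
    moreover have "\<forall>j<r. (\<Sum>i\<in>I. a' i * W i j) = 0"
    proof (intro allI impI)
      fix j assume "j < r"
      have "(of_int (\<Sum>i\<in>I. a' i * W i j) :: rat) = (\<Sum>i\<in>I. of_int D * (a i * v i j))"
        by (simp add: ka v_def mult.assoc)
      also have "\<dots> = of_int D * (\<Sum>i\<in>I. a i * v i j)" by (simp add: sum_distrib_left)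
      also have "\<dots> = 0" using a(3) \<open>j < r\<close> by simp
      finally show "(\<Sum>i\<in>I. a' i * W i j) = 0" by (simp only: of_int_eq_0_iff)
    qed
    ultimately show ?thesis by blast
  qed
qed



lemma prod_powi_distrib: "(\<Prod>i\<in>S. f i :: 'a::field) powi k = (\<Prod>i\<in>S. f i powi k)"
  by (induction S rule: infinite_finite_induct) (auto simp: power_int_mult_distrib)

lemma powi_sum: "(x::'a::field) \<noteq> 0 \<Longrightarrow> x powi (\<Sum>i\<in>S. g i) = (\<Prod>i\<in>S. x powi g i)"
  by (induction S rule: infinite_finite_induct) (auto simp: power_int_add)

lemma char_cong: "(\<And>j. j < r \<Longrightarrow> x j = y j) \<Longrightarrow> character r x t = character r y t"
  unfolding character_def by (intro prod.cong) auto

lemma char_Suc: "character (Suc r) x t = character r x t * t r powi x r"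
  unfolding character_def by simp

lemma char_nz: "(\<forall>j<r. t j \<noteq> 0) \<Longrightarrow> character r x t \<noteq> 0"
  unfolding character_def by (auto simp: power_int_not_zero)

lemma char_add: "(\<forall>j<r. t j \<noteq> 0) \<Longrightarrow> character r (\<lambda>j. x j + y j) t = character r x t * character r y t"
  unfolding character_def by (auto simp: power_int_add prod.distrib intro!: prod.cong)

lemma char_smul: "character r (\<lambda>j. m * x j) t = character r x t powi m"
  unfolding character_def by (simp add: prod_powi_distrib power_int_mult[symmetric] mult.commute)

lemma char_zero: "character r (\<lambda>j. 0) t = 1"
  unfolding character_def by simp

lemma char_lin: "(\<forall>j<r. t j \<noteq> 0) \<Longrightarrow>
   character r (\<lambda>j. \<Sum>i\<in>S. c i * W i j) t = (\<Prod>i\<in>S. character r (W i) t powi c i)"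
proof (induction S rule: infinite_finite_induct)
  case (infinite S) thus ?case by (simp add: char_zero)
next
  case empty thus ?case by (simp add: char_zero)
next
  case (insert x F)
  have "character r (\<lambda>j. \<Sum>i\<in>insert x F. c i * W i j) t =
        character r (\<lambda>j. c x * W x j + (\<Sum>i\<in>F. c i * W i j)) t" using insert by simp
  also have "\<dots> = character r (\<lambda>j. c x * W x j) t * character r (\<lambda>j. \<Sum>i\<in>F. c i * W i j) t"
    using insert.prems by (rule char_add)
  finally show ?case using insert by (simp add: char_smul)
qed

lemma root_exists:
  assumes ac: "algebraically_closed TYPE('a::field)" and c: "(c::'a) \<noteq> 0" and k: "k \<noteq> 0"
  shows "\<exists>s. s \<noteq> 0 \<and> s powi k = c"
proof -
  have nat_root: "\<exists>s. s ^ n = d" if "n > 0" for n and d :: 'a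
  proof -
    define p where "p = monom (1::'a) n + [:-d:]"
    have "degree p = n" unfolding p_def using that by (subst degree_add_eq_left) (auto simp: degree_monom_eq)
    hence "degree p > 0" using that by simp
    then obtain s where "poly p s = 0" using ac unfolding algebraically_closed_def by blast
    hence "s ^ n = d" by (simp add: p_def poly_monom)
    thus ?thesis by blast
  qed
  show ?thesis
  proof (cases "k > 0")
    case True
    then obtain s where s: "s ^ nat k = c" using nat_root[of "nat k" c] by auto
    hence "s \<noteq> 0" using c True by (auto simp: zero_power)
    moreover have "s powi k = c" using s True by (simp add: power_int_nonneg_exp)
    ultimately show ?thesis by blast
  next
    case False
    hence kn: "k < 0" using k by simp
    then obtain s where s: "s ^ nat (-k) = inverse c" using nat_root[of "nat (-k)" "inverse c"] by auto
    hence "s \<noteq> 0" using c kn by (auto simp: zero_power)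
    moreover have "s powi k = c"
    proof -
      have "s powi k = inverse (s powi (-k))" by (simp add: power_int_minus[of s "-k", simplified])
      also have "s powi (-k) = inverse c" using s kn by (simp add: power_int_nonneg_exp)
      finally show ?thesis by simp
    qed
    ultimately show ?thesis by blast
  qed
qed

lemma bez_fin:
  fixes x :: "nat \<Rightarrow> int"
  assumes "finite S"
  shows "\<exists>c g. (\<Sum>i\<in>S. c i * x i) = g \<and> (\<forall>i\<in>S. g dvd x i)"
  using assms
proof (induction S rule: finite_induct)
  case empty thus ?case by auto
next
  case (insert k S)
  then obtain c g where cg: "(\<Sum>i\<in>S. c i * x i) = g" "\<forall>i\<in>S. g dvd x i" by blast
  obtain u v where uv: "u * g + v * x k = gcd g (x k)" using bezout_int by blast
  define c' where "c' i = (if i = k then v else u * c i)" for i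
  have "(\<Sum>i\<in>insert k S. c' i * x i) = v * x k + (\<Sum>i\<in>S. u * (c i * x i))"
    using insert by (simp add: c'_def mult.assoc cong: sum.cong) (intro sum.cong, auto)
  also have "\<dots> = gcd g (x k)" using uv cg by (simp add: sum_distrib_left[symmetric])
  finally have e: "(\<Sum>i\<in>insert k S. c' i * x i) = gcd g (x k)" .
  have "\<forall>i\<in>insert k S. gcd g (x k) dvd x i" using cg(2) by (auto intro: dvd_trans)
  thus ?case using e by blast
qed



lemma torus_Suc: "t \<in> torus r \<Longrightarrow> s \<noteq> 0 \<Longrightarrow> t(r := s) \<in> torus (Suc r)"
  unfolding torus_def by auto

lemma torus_Suc1: "t \<in> torus r \<Longrightarrow> t \<in> torus (Suc r)"
  unfolding torus_def by (auto simp: less_Suc_eq)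

lemma torus_nz: "t \<in> torus r \<Longrightarrow> \<forall>j<r. t j \<noteq> 0"
  unfolding torus_def by auto

lemma char_upd: "character r x (t(r := s)) = character r x t"
  unfolding character_def by (intro prod.cong) auto

lemma solve_torus:
  fixes W :: "nat \<Rightarrow> nat \<Rightarrow> int" and u :: "nat \<Rightarrow> 'a::field"
  assumes ac: "algebraically_closed TYPE('a)"
    and fin: "finite S" and unz: "\<forall>i\<in>S. u i \<noteq> 0"
    and rel: "\<forall>b::nat\<Rightarrow>int. (\<forall>j<r. (\<Sum>i\<in>S. b i * W i j) = 0) \<longrightarrow> (\<Prod>i\<in>S. u i powi b i) = 1"
  shows "\<exists>t\<in>torus r. \<forall>i\<in>S. character r (W i) t = u i"
  using unz rel
proof (induction r arbitrary: W u)
  case 0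
  have "(\<Prod>i\<in>S. u i powi (if i = k then 1 else 0)) = u k" if "k \<in> S" for k
    using fin that by (simp add: prod.delta' if_distrib cong: if_cong)
  hence "u k = 1" if "k \<in> S" for k using 0(2) that by (metis (no_types) less_nat_zero_code)
  moreover have "(\<lambda>_. 1) \<in> torus 0" by (simp add: torus_def)
  ultimately show ?case by (intro bexI[of _ "\<lambda>_. 1"]) (auto simp: character_def)
next
  case (Suc r)
  obtain c g where cg: "(\<Sum>i\<in>S. c i * W i r) = g" "\<forall>i\<in>S. g dvd W i r" using bez_fin[OF fin, of "\<lambda>i. W i r"] by blast
  define m where "m i = W i r div g" for i
  have m: "W i r = m i * g" if "i \<in> S" for i using cg(2) that by (simp add: m_def)
  define w' where "w' j = (\<Sum>i\<in>S. c i * W i j)" for j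
  have w'r: "w' r = g" using cg(1) by (simp add: w'_def)
  define uw where "uw = (\<Prod>i\<in>S. u i powi c i)"
  have uwnz: "uw \<noteq> 0" unfolding uw_def using Suc.prems(1) fin by (auto simp: power_int_not_zero)
  define W' where "W' i j = W i j - m i * w' j" for i j
  define u' where "u' i = u i * uw powi (- m i)" for i
  have u'nz: "\<forall>i\<in>S. u' i \<noteq> 0" using Suc.prems(1) uwnz by (simp add: u'_def power_int_not_zero)
  have rel': "\<forall>b. (\<forall>j<r. (\<Sum>i\<in>S. b i * W' i j) = 0) \<longrightarrow> (\<Prod>i\<in>S. u' i powi b i) = 1"
  proof (intro allI impI)
    fix b assume hb: "\<forall>j<r. (\<Sum>i\<in>S. b i * W' i j) = 0"
    define B where "B = (\<Sum>i\<in>S. b i * m i)"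
    define b'' where "b'' i = b i - B * c i" for i
    have "\<forall>j<Suc r. (\<Sum>i\<in>S. b'' i * W i j) = 0"
    proof (intro allI impI)
      fix j assume "j < Suc r"
      have ex: "(\<Sum>i\<in>S. b'' i * W i j) = (\<Sum>i\<in>S. b i * W i j) - B * w' j"
        by (simp add: b''_def w'_def algebra_simps sum_subtractf sum_distrib_left)
      show "(\<Sum>i\<in>S. b'' i * W i j) = 0"
      proof (cases "j < r")
        case True
        have "(\<Sum>i\<in>S. b i * W i j) = (\<Sum>i\<in>S. b i * W' i j) + B * w' j"
          by (simp add: W'_def B_def algebra_simps sum_subtractf sum_distrib_left sum_distrib_right sum.distrib)
        thus ?thesis using ex hb True by simp
      next
        case False
        hence "j = r" using \<open>j < Suc r\<close> by simp
        have "(\<Sum>i\<in>S. b i * W i r) = (\<Sum>i\<in>S. b i * m i * g)" using m by (auto intro!: sum.cong)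
        also have "\<dots> = B * w' r" by (simp add: B_def w'r sum_distrib_right)
        finally show ?thesis using ex \<open>j = r\<close> by simp
      qed
    qed
    hence p1: "(\<Prod>i\<in>S. u i powi b'' i) = 1" using Suc.prems(2) by blast
    have "(\<Prod>i\<in>S. u i powi b'' i) = (\<Prod>i\<in>S. u i powi b i) / (\<Prod>i\<in>S. u i powi c i) powi B"
      using Suc.prems(1) by (simp add: b''_def power_int_diff prod_dividef prod_powi_distrib power_int_mult[symmetric] mult.commute)
    hence p2: "(\<Prod>i\<in>S. u i powi b i) = uw powi B" using p1 uwnz by (simp add: uw_def field_simps)
    have "(\<Prod>i\<in>S. u' i powi b i) = (\<Prod>i\<in>S. u i powi b i) * (\<Prod>i\<in>S. uw powi (- m i * b i))"
      by (simp add: u'_def power_int_mult_distrib prod.distrib power_int_mult[symmetric])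
    also have "(\<Prod>i\<in>S. uw powi (- m i * b i)) = uw powi (- B)"
      using uwnz by (simp add: powi_sum[symmetric] B_def sum_negf mult.commute)
    finally show "(\<Prod>i\<in>S. u' i powi b i) = 1" using p2 uwnz by (simp add: power_int_minus field_simps)
  qed
  obtain t' where t': "t' \<in> torus r" "\<forall>i\<in>S. character r (W' i) t' = u' i"
    using Suc.IH[OF u'nz rel'] by blast
  have t'nz: "\<forall>j<r. t' j \<noteq> 0" using torus_nz[OF t'(1)] .
  show ?case
  proof (cases "g = 0")
    case True
    hence Wr0: "W i r = 0" if "i \<in> S" for i using m that by simp
    have "m i = 0" if "i \<in> S" for i using True by (simp add: m_def)
    have "\<forall>i\<in>S. character (Suc r) (W i) t' = u i"
    proof
      fix i assume i: "i \<in> S"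
      have t'r: "t' r = 1" using t'(1) by (simp add: torus_def)
      have "character (Suc r) (W i) t' = character r (W i) t'" by (simp add: char_Suc Wr0[OF i] t'r)
      also have "\<dots> = character r (W' i) t'" using True by (intro char_cong) (simp add: W'_def m_def)
      also have "\<dots> = u i" using t'(2) i True by (simp add: u'_def m_def)
      finally show "character (Suc r) (W i) t' = u i" .
    qed
    thus ?thesis using torus_Suc1[OF t'(1)] by blast
  next
    case False
    have cwnz: "character r w' t' \<noteq> 0" using char_nz[OF t'nz] .
    obtain s where s: "s \<noteq> 0" "s powi g = uw / character r w' t'"
      using root_exists[OF ac _ False, of "uw / character r w' t'"] uwnz cwnz by auto
    define t where "t = t'(r := s)"
    have tT: "t \<in> torus (Suc r)" unfolding t_def using torus_Suc[OF t'(1) s(1)] .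
    have tnz: "\<forall>j<Suc r. t j \<noteq> 0" using torus_nz[OF tT] .
    have cS: "character (Suc r) x t = character r x t' * s powi x r" for x
      by (simp add: t_def char_Suc char_upd)
    have cw: "character (Suc r) w' t = uw" using cS[of w'] s cwnz by (simp add: w'r)
    have "\<forall>i\<in>S. character (Suc r) (W i) t = u i"
    proof
      fix i assume i: "i \<in> S"
      have "character (Suc r) (W i) t = character (Suc r) (\<lambda>j. W' i j + m i * w' j) t"
        by (intro char_cong) (simp add: W'_def)
      also have "\<dots> = character (Suc r) (W' i) t * character (Suc r) w' t powi m i"
        using tnz by (simp add: char_add char_smul)
      also have "character (Suc r) (W' i) t = character r (W' i) t'"
        using cS[of "W' i"] by (simp add: W'_def w'r m[OF i])
      also have "\<dots> = u' i" using t'(2) i by blast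
      finally show "character (Suc r) (W i) t = u i" using cw uwnz
        by (simp add: u'_def power_int_minus field_simps)
    qed
    thus ?thesis using tT by blast
  qed
qed



lemma poly_curve:
  fixes x :: "nat \<Rightarrow> 'a::field" and e :: "nat \<Rightarrow> nat"
  assumes "poly_fun m f"
  shows "\<exists>P. \<forall>s. f (\<lambda>i. if i < m then s ^ e i * x i else 0) = poly P s"
  using assms
proof (induction rule: poly_fun.induct)
  case (pf_const c) thus ?case by (intro exI[of _ "[:c:]"]) simp
next
  case (pf_var i) thus ?case by (intro exI[of _ "monom (x i) (e i)"]) (simp add: poly_monom mult.commute)
next
  case (pf_add f g)
  then obtain P Q where "\<forall>s. f (\<lambda>i. if i < m then s ^ e i * x i else 0) = poly P s"
    "\<forall>s. g (\<lambda>i. if i < m then s ^ e i * x i else 0) = poly Q s" by blast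
  thus ?case by (intro exI[of _ "P + Q"]) simp
next
  case (pf_mult f g)
  then obtain P Q where "\<forall>s. f (\<lambda>i. if i < m then s ^ e i * x i else 0) = poly P s"
    "\<forall>s. g (\<lambda>i. if i < m then s ^ e i * x i else 0) = poly Q s" by blast
  thus ?case by (intro exI[of _ "P * Q"]) simp
qed

lemma poly_vanish_0:
  fixes P :: "'a::{field_char_0} poly"
  assumes "\<forall>s. s \<noteq> 0 \<longrightarrow> poly P s = 0"
  shows "poly P 0 = 0"
proof (cases "P = 0")
  case False
  have "UNIV - {0} \<subseteq> {x. poly P x = 0}" using assms by auto
  moreover have "infinite (UNIV - {0::'a})" using infinite_UNIV_char_0 by auto
  ultimately have "infinite {x. poly P x = 0}" using finite_subset by blast
  thus ?thesis using poly_roots_finite[OF False] by blast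
qed simp

definition tl1 :: "nat \<Rightarrow> 'a::field \<Rightarrow> (nat \<Rightarrow> int) \<Rightarrow> nat \<Rightarrow> 'a" where
  "tl1 r s l = (\<lambda>j. if j < r then s powi l j else 1)"

lemma tl1_torus: "s \<noteq> 0 \<Longrightarrow> tl1 r s l \<in> torus r"
  unfolding tl1_def torus_def by (auto simp: power_int_not_zero)

lemma char_tl1: "(s::'a::field) \<noteq> 0 \<Longrightarrow> character r \<chi> (tl1 r s l) = s powi dotv r l \<chi>"
  unfolding character_def tl1_def dotv_def
  by (simp add: powi_sum power_int_mult[symmetric])

lemma zclosure_sub: "zariski_closed m C \<Longrightarrow> S \<subseteq> C \<Longrightarrow> zclosure m S \<subseteq> C"
  unfolding zclosure_def by blast

lemma zclosure_sup: "S \<subseteq> zclosure m S"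
  unfolding zclosure_def by blast

lemma curve_limit:
  fixes x :: "nat \<Rightarrow> 'a::field_char_0" and W :: "nat \<Rightarrow> nat \<Rightarrow> int"
  assumes x: "x \<in> aspace m" and l: "\<forall>i<m. x i \<noteq> 0 \<longrightarrow> dotv r l (W i) \<ge> 0"
  shows "(\<lambda>i. if i < m \<and> dotv r l (W i) = 0 then x i else 0) \<in> zclosure m (torbit m r W x)"
proof -
  define z where "z = (\<lambda>i. if i < m \<and> dotv r l (W i) = 0 then x i else 0)"
  define e where "e i = nat (dotv r l (W i))" for i
  define p where "p s = (\<lambda>i. if i < m then s ^ e i * x i else (0::'a))" for s
  have pt: "p s \<in> torbit m r W x" if "s \<noteq> 0" for s
  proof -
    have "tact m r W (tl1 r s l) x = p s"
    proof
      fix i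
      show "tact m r W (tl1 r s l) x i = p s i"
      proof (cases "i < m \<and> x i \<noteq> 0")
        case True
        hence "dotv r l (W i) \<ge> 0" using l by blast
        hence "s powi dotv r l (W i) = s ^ e i" by (simp add: e_def power_int_nonneg_exp)
        thus ?thesis using True that by (simp add: tact_def p_def char_tl1)
      next
        case False thus ?thesis by (auto simp: tact_def p_def)
      qed
    qed
    thus ?thesis unfolding torbit_def using tl1_torus[OF that] by (metis image_eqI)
  qed
  have p0: "p 0 = z"
  proof
    fix i
    show "p 0 i = z i"
    proof (cases "i < m \<and> x i \<noteq> 0")
      case True
      hence "dotv r l (W i) \<ge> 0" using l by blast
      hence "(e i = 0) = (dotv r l (W i) = 0)" by (simp add: e_def)
      thus ?thesis using True by (auto simp: p_def z_def)
    next
      case False thus ?thesis by (auto simp: p_def z_def)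
    qed
  qed
  have "z \<in> C" if C: "zariski_closed m C" "torbit m r W x \<subseteq> C" for C
  proof -
    obtain F where F: "\<forall>f\<in>F. poly_fun m f" "C = {y \<in> aspace m. \<forall>f\<in>F. f y = 0}" using C(1) unfolding zariski_closed_def by blast
    have "z \<in> aspace m" using x unfolding aspace_def z_def by auto
    moreover have "f z = 0" if f: "f \<in> F" for f
    proof -
      obtain P where P: "\<forall>s. f (p s) = poly P s" using poly_curve[OF F(1)[rule_format, OF f], of e x] unfolding p_def by blast
      have "\<forall>s. s \<noteq> 0 \<longrightarrow> poly P s = 0"
      proof (intro allI impI)
        fix s :: 'a assume "s \<noteq> 0"
        hence "p s \<in> C" using pt C(2) by blast
        thus "poly P s = 0" using F(2) f P by auto
      qed
      hence "poly P 0 = 0" by (rule poly_vanish_0)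
      thus ?thesis using P p0 by metis
    qed
    ultimately show ?thesis using F(2) by blast
  qed
  thus ?thesis unfolding zclosure_def z_def[symmetric] by blast
qed



definition suppv :: "nat \<Rightarrow> (nat \<Rightarrow> 'a::zero) \<Rightarrow> nat set" where
  "suppv m x = {i. i < m \<and> x i \<noteq> 0}"

lemma finite_suppv: "finite (suppv m x)"
  unfolding suppv_def by auto

lemma char_one: "character r \<chi> (\<lambda>_. 1) = 1"
  unfolding character_def by simp

lemma one_torus: "(\<lambda>_. 1) \<in> torus r" unfolding torus_def by simp

lemma tact_one: "x \<in> aspace m \<Longrightarrow> tact m r W (\<lambda>_. 1) x = x"
  unfolding tact_def aspace_def by (auto simp: char_one)

lemma self_torbit: "x \<in> aspace m \<Longrightarrow> x \<in> torbit m r W x"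
  unfolding torbit_def using one_torus tact_one by (metis image_eqI)

lemma char_mult: "character r \<chi> (\<lambda>j. t' j * t j) = character r \<chi> t' * (character r \<chi> t :: 'a::field)"
  unfolding character_def by (simp add: power_int_mult_distrib prod.distrib)

lemma torus_mult: "t \<in> torus r \<Longrightarrow> t' \<in> torus r \<Longrightarrow> (\<lambda>j. t' j * t j) \<in> torus r"
  unfolding torus_def by auto

lemma torus_inv: "t \<in> torus r \<Longrightarrow> (\<lambda>j. inverse (t j)) \<in> torus r"
  unfolding torus_def by auto

lemma tact_comp: "tact m r W t' (tact m r W t x) = tact m r W (\<lambda>j. t' j * t j) x"
  unfolding tact_def by (auto simp: char_mult)

lemma char_inv_mult: "t \<in> torus r \<Longrightarrow> character r \<chi> (\<lambda>j. inverse (t j) * t j) = (1::'a::field)"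
proof -
  assume "t \<in> torus r"
  hence "\<forall>j<r. inverse (t j) * t j = 1" unfolding torus_def by auto
  thus ?thesis unfolding character_def by simp
qed

lemma torbit_aspace: "torbit m r W x \<subseteq> aspace m"
  unfolding torbit_def tact_def aspace_def by auto

lemma torbit_eq:
  assumes y: "y \<in> torbit m r W x" and x: "x \<in> aspace m"
  shows "torbit m r W y = torbit m r W (x :: nat \<Rightarrow> 'a::field)"
proof -
  obtain t where t: "t \<in> torus r" "y = tact m r W t x" using y unfolding torbit_def by auto
  show ?thesis
  proof
    show "torbit m r W y \<subseteq> torbit m r W x"
    proof
      fix z assume "z \<in> torbit m r W y"
      then obtain t' where "t' \<in> torus r" "z = tact m r W t' y" unfolding torbit_def by auto
      hence "z = tact m r W (\<lambda>j. t' j * t j) x" "(\<lambda>j. t' j * t j) \<in> torus r"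
        using t tact_comp torus_mult by auto
      thus "z \<in> torbit m r W x" unfolding torbit_def by auto
    qed
  next
    show "torbit m r W x \<subseteq> torbit m r W y"
    proof
      fix z assume "z \<in> torbit m r W x"
      then obtain t' where t': "t' \<in> torus r" "z = tact m r W t' x" unfolding torbit_def by auto
      define s where "s = (\<lambda>j. t' j * inverse (t j))"
      have sT: "s \<in> torus r" unfolding s_def using torus_mult[OF torus_inv[OF t(1)] t'(1)] .
      have "tact m r W s y = tact m r W (\<lambda>j. s j * t j) x" using t tact_comp by simp
      also have "(\<lambda>j. s j * t j) = (\<lambda>j. t' j * (inverse (t j) * t j))" unfolding s_def by (simp add: mult.assoc)
      also have "tact m r W \<dots> x = tact m r W t' x"
      proof -
        have c: "character r (W i) (\<lambda>j. t' j * (inverse (t j) * t j)) = character r (W i) t'" for i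
          using char_mult[of r "W i" t' "\<lambda>j. inverse (t j) * t j"] char_inv_mult[OF t(1)] by simp
        show ?thesis unfolding tact_def c ..
      qed
      finally have "z = tact m r W s y" using t' by simp
      thus "z \<in> torbit m r W y" using sT unfolding torbit_def by auto
    qed
  qed
qed

lemma torbit_supp:
  assumes "y \<in> torbit m r W x"
  shows "suppv m y = suppv m (x :: nat \<Rightarrow> 'a::field)"
proof -
  obtain t where t: "t \<in> torus r" "y = tact m r W t x" using assms unfolding torbit_def by auto
  have "character r (W i) t \<noteq> 0" for i using char_nz torus_nz[OF t(1)] by blast
  thus ?thesis unfolding suppv_def t(2) tact_def by auto
qed

lemma pf_prod: "finite S \<Longrightarrow> (\<forall>i\<in>S. poly_fun m (g i)) \<Longrightarrow> poly_fun m (\<lambda>y. \<Prod>i\<in>S. g i y)"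
proof (induction S rule: finite_induct)
  case empty thus ?case by (simp add: pf_const)
next
  case (insert x F) thus ?case using pf_mult[of m "g x" "\<lambda>y. \<Prod>i\<in>F. g i y"] by simp
qed

lemma pf_pow: "poly_fun m f \<Longrightarrow> poly_fun m (\<lambda>y. f y ^ k)"
proof (induction k)
  case 0 thus ?case by (simp add: pf_const)
next
  case (Suc k) thus ?case using pf_mult[of m f "\<lambda>y. f y ^ k"] by simp
qed

lemma pf_diff: "poly_fun m f \<Longrightarrow> poly_fun m g \<Longrightarrow> poly_fun m (\<lambda>y. f y - g y)"
proof -
  assume "poly_fun m f" "poly_fun m g"
  hence "poly_fun m (\<lambda>y. f y + (- 1) * g y)" by (intro pf_add pf_mult pf_const)
  thus ?thesis by simp
qed

lemma pf_mono: "finite S \<Longrightarrow> S \<subseteq> {..<m} \<Longrightarrow> poly_fun m (\<lambda>y. \<Prod>i\<in>S. y i ^ k i)"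
  by (intro pf_prod) (auto intro!: pf_pow pf_var)



lemma char_rel:
  assumes "t \<in> torus r" "\<forall>j<r. (\<Sum>i\<in>S. b i * W i j) = 0"
  shows "(\<Prod>i\<in>S. character r (W i) t powi b i) = (1::'a::field)"
proof -
  have "(\<Prod>i\<in>S. character r (W i) t powi b i) = character r (\<lambda>j. \<Sum>i\<in>S. b i * W i j) t"
    using char_lin[OF torus_nz[OF assms(1)], where S=S and c=b and W=W] by simp
  also have "\<dots> = character r (\<lambda>j. 0) t" using assms(2) by (intro char_cong) simp
  finally show ?thesis by (simp add: char_zero)
qed

lemma gordan:
  fixes W :: "nat \<Rightarrow> nat \<Rightarrow> int"
  assumes "finite I" "\<not> (\<exists>l. \<forall>i\<in>I. dotv r l (W i) > 0)"
  shows "\<exists>a. (\<forall>i\<in>I. a i \<ge> 0) \<and> (\<exists>i\<in>I. a i > 0) \<and> (\<forall>j<r. (\<Sum>i\<in>I. a i * W i j) = 0)"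
  using motzkin_int[OF assms(1) order_refl, of r W] assms(2) by auto

lemma stiemke:
  fixes W :: "nat \<Rightarrow> nat \<Rightarrow> int"
  assumes fin: "finite I" and h: "\<not> (\<exists>l. (\<forall>i\<in>I. dotv r l (W i) \<ge> 0) \<and> (\<exists>i\<in>I. dotv r l (W i) > 0))"
  shows "\<exists>a. (\<forall>i\<in>I. a i > 0) \<and> (\<forall>j<r. (\<Sum>i\<in>I. a i * W i j) = 0)"
proof -
  have "\<forall>k\<in>I. \<exists>a. (\<forall>i\<in>I. a i \<ge> 0) \<and> a k > 0 \<and> (\<forall>j<r. (\<Sum>i\<in>I. a i * W i j) = 0)"
  proof
    fix k assume k: "k \<in> I"
    have "{k} \<subseteq> I" using k by auto
    from motzkin_int[OF fin this, of r W] h k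
    show "\<exists>a. (\<forall>i\<in>I. a i \<ge> 0) \<and> a k > 0 \<and> (\<forall>j<r. (\<Sum>i\<in>I. a i * W i j) = 0)" by auto
  qed
  then obtain A where A: "\<forall>k\<in>I. (\<forall>i\<in>I. A k i \<ge> 0) \<and> A k k > 0 \<and> (\<forall>j<r. (\<Sum>i\<in>I. A k i * W i j) = 0)"
    by metis
  define a where "a i = (\<Sum>k\<in>I. A k i)" for i
  have "\<forall>i\<in>I. a i > 0"
  proof
    fix i assume i: "i \<in> I"
    have "A i i \<le> a i" unfolding a_def using A i fin by (intro member_le_sum) auto
    thus "a i > 0" using A i by force
  qed
  moreover have "\<forall>j<r. (\<Sum>i\<in>I. a i * W i j) = 0"
  proof (intro allI impI)
    fix j assume j: "j < r"
    have "(\<Sum>i\<in>I. a i * W i j) = (\<Sum>k\<in>I. \<Sum>i\<in>I. A k i * W i j)"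
      unfolding a_def by (simp add: sum_distrib_right) (rule sum.swap)
    also have "\<dots> = 0" using A j by simp
    finally show "(\<Sum>i\<in>I. a i * W i j) = 0" .
  qed
  ultimately show ?thesis by blast
qed

lemma null_iff:
  fixes x :: "nat \<Rightarrow> 'a::field_char_0" and W :: "nat \<Rightarrow> nat \<Rightarrow> int"
  assumes x: "x \<in> aspace m"
  shows "(\<lambda>_. 0) \<in> zclosure m (torbit m r W x) \<longleftrightarrow> (\<exists>l. \<forall>i\<in>suppv m x. dotv r l (W i) > 0)"
proof
  assume "\<exists>l. \<forall>i\<in>suppv m x. dotv r l (W i) > 0"
  then obtain l where l: "\<forall>i\<in>suppv m x. dotv r l (W i) > 0" by blast
  have "\<forall>i<m. x i \<noteq> 0 \<longrightarrow> dotv r l (W i) \<ge> 0" using l by (auto simp: suppv_def intro: less_imp_le)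
  from curve_limit[OF x this]
  have "(\<lambda>i. if i < m \<and> dotv r l (W i) = 0 then x i else 0) \<in> zclosure m (torbit m r W x)" .
  moreover have "(\<lambda>i. if i < m \<and> dotv r l (W i) = 0 then x i else 0) = (\<lambda>_. 0)"
    using l by (auto simp: suppv_def fun_eq_iff)
  ultimately show "(\<lambda>_. 0) \<in> zclosure m (torbit m r W x)" by simp
next
  assume z: "(\<lambda>_. 0) \<in> zclosure m (torbit m r W x)"
  show "\<exists>l. \<forall>i\<in>suppv m x. dotv r l (W i) > 0"
  proof (rule ccontr)
    assume h: "\<not> ?thesis"
    define S where "S = suppv m x"
    have finS: "finite S" and Sm: "S \<subseteq> {..<m}" unfolding S_def suppv_def by auto
    obtain a where a: "\<forall>i\<in>S. a i \<ge> 0" "\<exists>i\<in>S. a i > 0" "\<forall>j<r. (\<Sum>i\<in>S. a i * W i j) = 0"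
      using gordan[OF finS, of r W] h unfolding S_def by blast
    define f where "f y = (\<Prod>i\<in>S. y i ^ nat (a i)) - (\<Prod>i\<in>S. x i ^ nat (a i))" for y :: "nat \<Rightarrow> 'a"
    define C where "C = {y \<in> aspace m. \<forall>g\<in>{f}. g y = 0}"
    have pf: "poly_fun m f" unfolding f_def by (intro pf_diff pf_mono finS Sm pf_const)
    have Cc: "zariski_closed m C" unfolding zariski_closed_def C_def using pf by blast
    have sub: "torbit m r W x \<subseteq> C"
    proof
      fix y assume "y \<in> torbit m r W x"
      then obtain t where t: "t \<in> torus r" "y = tact m r W t x" unfolding torbit_def by auto
      have "(\<Prod>i\<in>S. y i ^ nat (a i)) = (\<Prod>i\<in>S. character r (W i) t powi a i * x i ^ nat (a i))"
        using Sm a(1) by (intro prod.cong refl) (auto simp: t(2) tact_def power_mult_distrib power_int_nonneg_exp)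
      also have "\<dots> = (\<Prod>i\<in>S. character r (W i) t powi a i) * (\<Prod>i\<in>S. x i ^ nat (a i))"
        by (simp add: prod.distrib)
      also have "(\<Prod>i\<in>S. character r (W i) t powi a i) = 1" using char_rel[OF t(1) a(3)] .
      finally have "f y = 0" unfolding f_def by simp
      moreover have "y \<in> aspace m" using torbit_aspace \<open>y \<in> torbit m r W x\<close> by blast
      ultimately show "y \<in> C" unfolding C_def by simp
    qed
    have "(\<lambda>_. 0) \<in> C" using zclosure_sub[OF Cc sub] z by blast
    moreover have "f (\<lambda>_. 0) \<noteq> 0"
    proof -
      obtain k where k: "k \<in> S" "a k > 0" using a(2) by blast
      have "(\<Prod>i\<in>S. (0::'a) ^ nat (a i)) = 0" using k finS by (intro prod_zero) auto
      moreover have "(\<Prod>i\<in>S. x i ^ nat (a i)) \<noteq> 0" using finS by (auto simp: S_def suppv_def)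
      ultimately show ?thesis unfolding f_def by simp
    qed
    ultimately show False unfolding C_def by simp
  qed
qed



lemma powi_split: "(c::'a::field) \<noteq> 0 \<Longrightarrow> c powi b = c ^ nat (max b 0) / c ^ nat (max (- b) 0)"
proof (cases "b \<ge> 0")
  case True thus ?thesis by (simp add: power_int_nonneg_exp)
next
  case False
  hence "b = - (- b)" "- b \<ge> 0" by auto
  hence "c powi b = inverse (c ^ nat (- b))" by (metis power_int_minus power_int_nonneg_exp)
  thus ?thesis using False by (simp add: field_simps)
qed

definition fbin :: "nat set \<Rightarrow> (nat \<Rightarrow> 'a::field) \<Rightarrow> (nat \<Rightarrow> int) \<Rightarrow> (nat \<Rightarrow> 'a) \<Rightarrow> 'a" where
  "fbin S x b y = (\<Prod>i\<in>S. y i ^ nat (max (b i) 0)) * (\<Prod>i\<in>S. x i ^ nat (max (- b i) 0))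
                 - (\<Prod>i\<in>S. y i ^ nat (max (- b i) 0)) * (\<Prod>i\<in>S. x i ^ nat (max (b i) 0))"

lemma prod_powi_split:
  assumes "finite S" "\<forall>i\<in>S. (c i :: 'a::field) \<noteq> 0"
  shows "(\<Prod>i\<in>S. c i powi b i) = (\<Prod>i\<in>S. c i ^ nat (max (b i) 0)) / (\<Prod>i\<in>S. c i ^ nat (max (- b i) 0))"
  using assms by (simp add: powi_split prod_dividef)

lemma closed_iff:
  fixes x :: "nat \<Rightarrow> 'a::field_char_0" and W :: "nat \<Rightarrow> nat \<Rightarrow> int"
  assumes ac: "algebraically_closed TYPE('a)" and x: "x \<in> aspace m"
  shows "zariski_closed m (torbit m r W x) \<longleftrightarrow>
     \<not> (\<exists>l. (\<forall>i\<in>suppv m x. dotv r l (W i) \<ge> 0) \<and> (\<exists>i\<in>suppv m x. dotv r l (W i) > 0))"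
proof
  assume cl: "zariski_closed m (torbit m r W x)"
  show "\<not> (\<exists>l. (\<forall>i\<in>suppv m x. dotv r l (W i) \<ge> 0) \<and> (\<exists>i\<in>suppv m x. dotv r l (W i) > 0))"
  proof
    assume "\<exists>l. (\<forall>i\<in>suppv m x. dotv r l (W i) \<ge> 0) \<and> (\<exists>i\<in>suppv m x. dotv r l (W i) > 0)"
    then obtain l k where l: "\<forall>i\<in>suppv m x. dotv r l (W i) \<ge> 0" and k: "k \<in> suppv m x" "dotv r l (W k) > 0" by blast
    have "\<forall>i<m. x i \<noteq> 0 \<longrightarrow> dotv r l (W i) \<ge> 0" using l by (auto simp: suppv_def)
    from curve_limit[OF x this]
    have "(\<lambda>i. if i < m \<and> dotv r l (W i) = 0 then x i else 0) \<in> torbit m r W x"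
      using zclosure_sub[OF cl order_refl] by blast
    from torbit_supp[OF this] have "suppv m (\<lambda>i. if i < m \<and> dotv r l (W i) = 0 then x i else 0) = suppv m x" .
    moreover have "k \<notin> suppv m (\<lambda>i. if i < m \<and> dotv r l (W i) = 0 then x i else 0)" using k by (simp add: suppv_def)
    ultimately show False using k by simp
  qed
next
  assume h: "\<not> (\<exists>l. (\<forall>i\<in>suppv m x. dotv r l (W i) \<ge> 0) \<and> (\<exists>i\<in>suppv m x. dotv r l (W i) > 0))"
  define S where "S = suppv m x"
  have finS: "finite S" and Sm: "S \<subseteq> {..<m}" unfolding S_def suppv_def by auto
  have xS: "\<forall>i\<in>S. x i \<noteq> 0" by (simp add: S_def suppv_def)
  obtain B where B: "\<forall>i\<in>S. B i > 0" "\<forall>j<r. (\<Sum>i\<in>S. B i * W i j) = 0"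
    using stiemke[OF finS, of r W] h unfolding S_def by blast
  define F1 :: "((nat \<Rightarrow> 'a) \<Rightarrow> 'a) set" where "F1 = (\<lambda>i y. y i) ` {i. i < m \<and> i \<notin> S}"
  define F2 where "F2 = fbin S x ` {b. \<forall>j<r. (\<Sum>i\<in>S. b i * W i j) = 0}"
  have pf: "\<forall>f\<in>F1 \<union> F2. poly_fun m f"
    unfolding F1_def F2_def fbin_def by (auto intro!: pf_var pf_diff pf_mult pf_mono finS Sm pf_const)
  have eq: "torbit m r W x = {y \<in> aspace m. \<forall>f\<in>F1 \<union> F2. f y = 0}"
  proof
    show "torbit m r W x \<subseteq> {y \<in> aspace m. \<forall>f\<in>F1 \<union> F2. f y = 0}"
    proof
      fix y assume yT: "y \<in> torbit m r W x"
      then obtain t where t: "t \<in> torus r" "y = tact m r W t x" unfolding torbit_def by auto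
      define c where "c i = character r (W i) t" for i
      have cnz: "c i \<noteq> 0" for i unfolding c_def using char_nz torus_nz[OF t(1)] by blast
      have yc: "y i = c i * x i" if "i \<in> S" for i using that Sm t(2) by (auto simp: tact_def c_def)
      have "f y = 0" if "f \<in> F1" for f
        using that t(2) unfolding F1_def by (auto simp: tact_def S_def suppv_def)
      moreover have "f y = 0" if "f \<in> F2" for f
      proof -
        obtain b where b: "\<forall>j<r. (\<Sum>i\<in>S. b i * W i j) = 0" "f = fbin S x b" using \<open>f \<in> F2\<close> unfolding F2_def by auto
        have r1: "(\<Prod>i\<in>S. c i powi b i) = 1" using char_rel[OF t(1) b(1)] unfolding c_def .
        hence r2: "(\<Prod>i\<in>S. c i ^ nat (max (b i) 0)) = (\<Prod>i\<in>S. c i ^ nat (max (- b i) 0))"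
          using prod_powi_split[OF finS, of c b] cnz finS by (auto simp: prod_zero_iff)
        have py: "(\<Prod>i\<in>S. y i ^ k i) = (\<Prod>i\<in>S. c i ^ k i) * (\<Prod>i\<in>S. x i ^ k i)" for k
          by (simp add: yc power_mult_distrib prod.distrib cong: prod.cong)
        show ?thesis unfolding b(2) fbin_def py r2 by (simp add: algebra_simps)
      qed
      ultimately show "y \<in> {y \<in> aspace m. \<forall>f\<in>F1 \<union> F2. f y = 0}" using torbit_aspace yT by blast
    qed
  next
    show "{y \<in> aspace m. \<forall>f\<in>F1 \<union> F2. f y = 0} \<subseteq> torbit m r W x"
    proof
      fix y assume "y \<in> {y \<in> aspace m. \<forall>f\<in>F1 \<union> F2. f y = 0}"
      hence ya: "y \<in> aspace m" and yF: "\<forall>f\<in>F1 \<union> F2. f y = 0" by auto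
      have y0: "y i = 0" if "i < m" "i \<notin> S" for i using yF that unfolding F1_def by auto
      have fb0: "fbin S x b y = 0" if "\<forall>j<r. (\<Sum>i\<in>S. b i * W i j) = 0" for b
        using yF that unfolding F2_def by auto
      have ynz: "\<forall>i\<in>S. y i \<noteq> 0"
      proof -
        have "fbin S x B y = 0" using fb0 B(2) by blast
        moreover have "(\<Prod>i\<in>S. z i ^ nat (max (B i) 0)) = (\<Prod>i\<in>S. z i ^ nat (B i))" for z :: "nat \<Rightarrow> 'a"
          using B(1) by (intro prod.cong refl) simp
        moreover have "(\<Prod>i\<in>S. z i ^ nat (max (- B i) 0)) = 1" for z :: "nat \<Rightarrow> 'a"
          using B(1) by (intro prod.neutral) simp
        ultimately have "(\<Prod>i\<in>S. y i ^ nat (B i)) = (\<Prod>i\<in>S. x i ^ nat (B i))"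
          unfolding fbin_def by simp
        moreover have "(\<Prod>i\<in>S. x i ^ nat (B i)) \<noteq> 0" using xS finS by auto
        ultimately have "(\<Prod>i\<in>S. y i ^ nat (B i)) \<noteq> 0" by simp
        thus ?thesis using finS B(1) by (auto simp: prod_zero_iff)
      qed
      define u where "u i = y i / x i" for i
      have unz: "\<forall>i\<in>S. u i \<noteq> 0" using ynz xS by (simp add: u_def)
      have urel: "\<forall>b. (\<forall>j<r. (\<Sum>i\<in>S. b i * W i j) = 0) \<longrightarrow> (\<Prod>i\<in>S. u i powi b i) = 1"
      proof (intro allI impI)
        fix b assume b: "\<forall>j<r. (\<Sum>i\<in>S. b i * W i j) = 0"
        have e: "fbin S x b y = 0" using fb0 b by blast
        define yp where "yp = (\<Prod>i\<in>S. y i ^ nat (max (b i) 0))"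
        define yn where "yn = (\<Prod>i\<in>S. y i ^ nat (max (- b i) 0))"
        define xp where "xp = (\<Prod>i\<in>S. x i ^ nat (max (b i) 0))"
        define xn where "xn = (\<Prod>i\<in>S. x i ^ nat (max (- b i) 0))"
        have nz: "yp \<noteq> 0" "yn \<noteq> 0" "xp \<noteq> 0" "xn \<noteq> 0" unfolding yp_def yn_def xp_def xn_def
          using finS ynz xS by auto
        have e2: "yp * xn = yn * xp" using e unfolding fbin_def yp_def yn_def xp_def xn_def by simp
        have "(\<Prod>i\<in>S. u i powi b i) = (\<Prod>i\<in>S. y i powi b i) / (\<Prod>i\<in>S. x i powi b i)"
          by (simp add: u_def power_int_divide_distrib prod_dividef)
        also have "\<dots> = (yp / yn) / (xp / xn)" unfolding yp_def yn_def xp_def xn_def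
          using prod_powi_split[OF finS ynz, of b] prod_powi_split[OF finS xS, of b] by simp
        also have "\<dots> = 1" using nz e2 by (simp add: field_simps)
        finally show "(\<Prod>i\<in>S. u i powi b i) = 1" .
      qed
      obtain t where t: "t \<in> torus r" "\<forall>i\<in>S. character r (W i) t = u i"
        using solve_torus[OF ac finS unz urel] by blast
      have "tact m r W t x = y"
      proof
        fix i
        show "tact m r W t x i = y i"
        proof (cases "i < m")
          case True
          show ?thesis
          proof (cases "i \<in> S")
            case True
            thus ?thesis using t(2) xS \<open>i < m\<close> by (simp add: tact_def u_def)
          next
            case False
            thus ?thesis using y0 \<open>i < m\<close> by (simp add: tact_def S_def suppv_def)
          qed
        next
          case False thus ?thesis using ya by (simp add: tact_def aspace_def)
        qed
      qed
      thus "y \<in> torbit m r W x" using t(1) unfolding torbit_def by auto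
    qed
  qed
  show "zariski_closed m (torbit m r W x)" unfolding zariski_closed_def using pf eq by blast
qed



definition NCS :: "nat \<Rightarrow> (nat \<Rightarrow> nat \<Rightarrow> int) \<Rightarrow> nat set \<Rightarrow> bool" where
  "NCS r w S \<longleftrightarrow> (\<exists>l. \<forall>i\<in>S. dotv r l (w i) > 0)"

definition INDEP :: "nat \<Rightarrow> (nat \<Rightarrow> nat \<Rightarrow> int) \<Rightarrow> nat set \<Rightarrow> bool" where
  "INDEP r w S \<longleftrightarrow> (\<forall>b. (\<forall>j<r. (\<Sum>i\<in>S. b i * w i j) = 0) \<longrightarrow> (\<forall>i\<in>S. b i = 0))"

definition VC :: "nat \<Rightarrow> nat \<Rightarrow> (nat \<Rightarrow> nat \<Rightarrow> int) \<Rightarrow> bool" where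
  "VC n r w \<longleftrightarrow> (\<forall>S \<subseteq> {..<n}. NCS r w S \<longrightarrow> INDEP r w S)"

lemma powi_inj_nat:
  assumes q: "q \<noteq> 0" and e: "(of_nat (Suc c) :: 'a::field_char_0) powi q = of_nat (Suc d) powi q"
  shows "c = d"
proof -
  have pos: "(of_nat (Suc c) :: 'a) ^ nat \<bar>q\<bar> = of_nat (Suc d) ^ nat \<bar>q\<bar>"
  proof (cases "q > 0")
    case True thus ?thesis using e by (simp add: power_int_nonneg_exp)
  next
    case False
    hence "q = - (- q)" "- q \<ge> 0" using q by auto
    hence "inverse ((of_nat (Suc c) :: 'a) ^ nat (- q)) = inverse (of_nat (Suc d) ^ nat (- q))"
      using e by (metis power_int_minus power_int_nonneg_exp)
    thus ?thesis using False by simp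
  qed
  hence "of_nat (Suc c ^ nat \<bar>q\<bar>) = (of_nat (Suc d ^ nat \<bar>q\<bar>) :: 'a)" by simp
  hence "Suc c ^ nat \<bar>q\<bar> = Suc d ^ nat \<bar>q\<bar>" using of_nat_eq_iff by blast
  moreover have "nat \<bar>q\<bar> > 0" using q by simp
  ultimately have "Suc c = Suc d" using power_eq_iff_eq_base[of "nat \<bar>q\<bar>" "Suc c" "Suc d"] by simp
  thus ?thesis by simp
qed

lemma visible_iff:
  assumes ac: "algebraically_closed TYPE('a::field_char_0)"
  shows "visible n r w TYPE('a) \<longleftrightarrow> VC n r w"
proof
  assume vis: "visible n r w TYPE('a)"
  show "VC n r w"
  proof (rule ccontr)
    assume "\<not> VC n r w"
    then obtain S l b k where S: "S \<subseteq> {..<n}" and l: "\<forall>i\<in>S. dotv r l (w i) > 0"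
      and b: "\<forall>j<r. (\<Sum>i\<in>S. b i * w i j) = 0" and k: "k \<in> S" "b k \<noteq> 0"
      unfolding VC_def NCS_def INDEP_def by blast
    have finS: "finite S" using S finite_subset by blast
    define xc where "xc c = (\<lambda>i. if i \<in> S then (if i = k then of_nat (Suc c) else 1) else (0::'a))" for c
    define Phi where "Phi y = (\<Prod>i\<in>S. y i powi b i)" for y :: "nat \<Rightarrow> 'a"
    have xa: "xc c \<in> aspace n" for c using S unfolding xc_def aspace_def by auto
    have sxc: "suppv n (xc c) = S" for c
    proof -
      have "(of_nat (Suc c) :: 'a) \<noteq> 0" using of_nat_eq_0_iff by blast
      thus ?thesis using S unfolding xc_def suppv_def by (auto simp del: of_nat_Suc)
    qed
    have nul: "(\<lambda>_. 0) \<in> zclosure n (torbit n r w (xc c))" for c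
      using null_iff[OF xa[of c], where r=r and W=w] l sxc by auto
    have phx: "Phi (xc c) = of_nat (Suc c) powi b k" for c
    proof -
      have "Phi (xc c) = (\<Prod>i\<in>S. if i = k then of_nat (Suc c) powi b k else 1)"
        unfolding Phi_def xc_def by (intro prod.cong refl) auto
      also have "\<dots> = of_nat (Suc c) powi b k" using finS k by (simp add: prod.delta)
      finally show ?thesis .
    qed
    have inv: "Phi y = Phi (xc c)" if yo: "y \<in> torbit n r w (xc c)" for y c
    proof -
      obtain t where t: "t \<in> torus r" "y = tact n r w t (xc c)" using yo unfolding torbit_def by auto
      have "Phi y = (\<Prod>i\<in>S. character r (w i) t powi b i * xc c i powi b i)"
        unfolding Phi_def using S by (intro prod.cong refl) (auto simp: t(2) tact_def power_int_mult_distrib)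
      also have "\<dots> = (\<Prod>i\<in>S. character r (w i) t powi b i) * Phi (xc c)" by (simp add: prod.distrib Phi_def)
      finally show ?thesis using char_rel[OF t(1) b] by simp
    qed
    have injo: "inj (\<lambda>c. torbit n r w (xc c))"
    proof
      fix c d assume "torbit n r w (xc c) = torbit n r w (xc d)"
      hence "xc d \<in> torbit n r w (xc c)" using self_torbit[OF xa] by blast
      hence "Phi (xc d) = Phi (xc c)" by (rule inv)
      thus "c = d" using powi_inj_nat[OF k(2)] phx by metis
    qed
    have "range (\<lambda>c. torbit n r w (xc c)) \<subseteq>
       {torbit n r w (x :: nat \<Rightarrow> 'a) | x. x \<in> aspace n \<and> (\<lambda>_. 0) \<in> zclosure n (torbit n r w x)}"
      using xa nul by blast
    moreover have "infinite (range (\<lambda>c. torbit n r w (xc c)))" using injo range_inj_infinite by blast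
    ultimately show False using vis unfolding visible_def using finite_subset by blast
  qed
next
  assume vc: "VC n r w"
  define ind where "ind S = (\<lambda>i::nat. if i \<in> S then 1 else (0::'a))" for S
  have "{torbit n r w (x :: nat \<Rightarrow> 'a) | x. x \<in> aspace n \<and> (\<lambda>_. 0) \<in> zclosure n (torbit n r w x)}
      \<subseteq> (\<lambda>S. torbit n r w (ind S)) ` Pow {..<n}"
  proof
    fix Ob assume "Ob \<in> {torbit n r w (x :: nat \<Rightarrow> 'a) | x. x \<in> aspace n \<and> (\<lambda>_. 0) \<in> zclosure n (torbit n r w x)}"
    then obtain x where x: "x \<in> aspace n" "(\<lambda>_. 0) \<in> zclosure n (torbit n r w x)" "Ob = torbit n r w x" by blast
    define S where "S = suppv n x"
    have Sn: "S \<subseteq> {..<n}" and finS: "finite S" unfolding S_def suppv_def by auto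
    have xS: "\<forall>i\<in>S. x i \<noteq> 0" unfolding S_def suppv_def by auto
    have "NCS r w S" using null_iff[OF x(1)] x(2) unfolding NCS_def S_def by blast
    hence ind: "INDEP r w S" using vc Sn unfolding VC_def by blast
    define u where "u i = inverse (x i)" for i
    have unz: "\<forall>i\<in>S. u i \<noteq> 0" using xS by (simp add: u_def)
    have urel: "\<forall>b. (\<forall>j<r. (\<Sum>i\<in>S. b i * w i j) = 0) \<longrightarrow> (\<Prod>i\<in>S. u i powi b i) = 1"
    proof (intro allI impI)
      fix b assume "\<forall>j<r. (\<Sum>i\<in>S. b i * w i j) = 0"
      hence "\<forall>i\<in>S. b i = 0" using ind unfolding INDEP_def by blast
      thus "(\<Prod>i\<in>S. u i powi b i) = 1" by simp
    qed
    obtain t where t: "t \<in> torus r" "\<forall>i\<in>S. character r (w i) t = u i"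
      using solve_torus[OF ac finS unz urel] by blast
    have "tact n r w t x = ind S"
    proof
      fix i show "tact n r w t x i = ind S i"
      proof (cases "i \<in> S")
        case True
        hence "i < n" "x i \<noteq> 0" using Sn xS by auto
        thus ?thesis using True t(2) by (simp add: tact_def ind_def u_def)
      next
        case False
        hence "x i = 0" if "i < n" using that unfolding S_def suppv_def by auto
        thus ?thesis using False by (simp add: tact_def ind_def)
      qed
    qed
    hence "ind S \<in> torbit n r w x" using t(1) unfolding torbit_def by (metis image_eqI)
    hence "torbit n r w (ind S) = Ob" using torbit_eq x by simp
    thus "Ob \<in> (\<lambda>S. torbit n r w (ind S)) ` Pow {..<n}" using Sn by auto
  qed
  moreover have "finite ((\<lambda>S. torbit n r w (ind S)) ` Pow {..<n})" by simp
  ultimately show "visible n r w TYPE('a)" unfolding visible_def using finite_subset by blast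
qed



definition relv :: "nat \<Rightarrow> nat \<Rightarrow> (nat \<Rightarrow> nat \<Rightarrow> int) \<Rightarrow> (nat \<Rightarrow> int) \<Rightarrow> bool" where
  "relv n r w \<rho> \<longleftrightarrow> (\<forall>i\<ge>n. \<rho> i = 0) \<and> (\<forall>j<r. (\<Sum>i<n. \<rho> i * w i j) = 0)"

definition suppi :: "nat \<Rightarrow> (nat \<Rightarrow> int) \<Rightarrow> nat set" where
  "suppi n \<rho> = {i. i < n \<and> \<rho> i \<noteq> 0}"

definition conformal :: "(nat \<Rightarrow> int) \<Rightarrow> (nat \<Rightarrow> int) \<Rightarrow> bool" where
  "conformal a b \<longleftrightarrow> (\<forall>i. (a i > 0 \<longrightarrow> b i > 0) \<and> (a i < 0 \<longrightarrow> b i < 0))"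

lemma conformal_trans: "conformal a b \<Longrightarrow> conformal b c \<Longrightarrow> conformal a c"
  unfolding conformal_def by blast

lemma conformal_refl: "conformal a a" unfolding conformal_def by blast

lemma conformal_neg: "conformal a (\<lambda>i. - b i) \<Longrightarrow> conformal (\<lambda>i. - a i) b"
  unfolding conformal_def by force

lemma relv_lin: "relv n r w a \<Longrightarrow> relv n r w b \<Longrightarrow> relv n r w (\<lambda>i. c * a i + d * b i)"
proof -
  assume a: "relv n r w a" and b: "relv n r w b"
  have "(\<Sum>i<n. (c * a i + d * b i) * w i j) = c * (\<Sum>i<n. a i * w i j) + d * (\<Sum>i<n. b i * w i j)" for j
    by (simp add: sum.distrib sum_distrib_left distrib_right mult.assoc)
  thus ?thesis using a b unfolding relv_def by simp
qed

lemma relv_neg: "relv n r w a \<Longrightarrow> relv n r w (\<lambda>i. - a i)"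
  using relv_lin[of n r w a a "-1" 0] by simp

lemma relv_zero: "relv n r w (\<lambda>_. 0)" unfolding relv_def by simp

lemma finite_suppi: "finite (suppi n \<rho>)" unfolding suppi_def by auto

lemma min_ratio:
  fixes p q :: "nat \<Rightarrow> int"
  assumes "finite D" "D \<noteq> {}" "\<forall>j\<in>D. q j > 0"
  shows "\<exists>i\<in>D. \<forall>j\<in>D. p i * q j \<le> p j * q i"
proof -
  define f where "f j = (of_int (p j) / of_int (q j) :: rat)" for j
  have "Min (f ` D) \<in> f ` D" using assms by (intro Min_in) auto
  then obtain i where i: "i \<in> D" "f i = Min (f ` D)" by auto
  have key: "p i * q j \<le> p j * q i" if j: "j \<in> D" for j
  proof -
    have "f i \<le> f j" using i j assms(1) by auto
    moreover have "q i > 0" "q j > 0" using assms(3) i(1) j by auto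
    ultimately have "of_int (p i) * of_int (q j) \<le> (of_int (p j) * of_int (q i) :: rat)"
      unfolding f_def by (simp add: field_simps)
    thus ?thesis by (metis of_int_le_iff of_int_mult)
  qed
  show ?thesis by (rule bexI[OF _ i(1)]) (use key in blast)
qed

lemma reduce:
  assumes rs: "relv n r w \<sigma>" and rt: "relv n r w \<tau>" and tnn: "\<forall>i. \<tau> i \<ge> 0"
    and tsub: "\<forall>i. \<tau> i \<noteq> 0 \<longrightarrow> \<sigma> i \<noteq> 0"
    and tp: "\<exists>i. \<tau> i > 0 \<and> \<sigma> i > 0" and sn: "\<exists>j. \<sigma> j < 0"
  shows "\<exists>\<sigma>''. relv n r w \<sigma>'' \<and> (\<exists>j. \<sigma>'' j \<noteq> 0) \<and> conformal \<sigma>'' \<sigma> \<and> card (suppi n \<sigma>'') < card (suppi n \<sigma>)"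
proof -
  define D where "D = {i. i < n \<and> \<tau> i > 0 \<and> \<sigma> i > 0}"
  have tn: "\<tau> i = 0" if "i \<ge> n" for i using rt that unfolding relv_def by auto
  have "D \<noteq> {}"
  proof -
    obtain i where i: "\<tau> i > 0" "\<sigma> i > 0" using tp by blast
    have "i < n" using tn i by (metis leI less_irrefl)
    thus ?thesis using i unfolding D_def by blast
  qed
  moreover have "finite D" unfolding D_def by auto
  moreover have "\<forall>j\<in>D. \<tau> j > 0" unfolding D_def by auto
  ultimately obtain i0 where i0: "i0 \<in> D" "\<forall>j\<in>D. \<sigma> i0 * \<tau> j \<le> \<sigma> j * \<tau> i0"
    using min_ratio[of D \<tau> \<sigma>] by blast
  have i0p: "i0 < n" "\<tau> i0 > 0" "\<sigma> i0 > 0" using i0(1) unfolding D_def by auto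
  define s where "s j = \<tau> i0 * \<sigma> j + (- \<sigma> i0) * \<tau> j" for j
  have rel: "relv n r w s" unfolding s_def by (rule relv_lin[OF rs rt])
  have c: "(s j > 0 \<longrightarrow> \<sigma> j > 0) \<and> (s j < 0 \<longrightarrow> \<sigma> j < 0) \<and> (\<sigma> j < 0 \<longrightarrow> s j < 0) \<and> (\<sigma> j = 0 \<longrightarrow> s j = 0)" for j
  proof -
    have t0: "\<tau> j \<ge> 0" using tnn by auto
    consider "\<sigma> j = 0" | "\<sigma> j < 0" | "\<sigma> j > 0" by linarith
    thus ?thesis
    proof cases
      case 1 hence "\<tau> j = 0" using tsub by auto
      thus ?thesis using 1 by (simp add: s_def)
    next
      case 2
      have "\<tau> i0 * \<sigma> j < 0" using 2 i0p by (simp add: mult_pos_neg)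
      moreover have "\<sigma> i0 * \<tau> j \<ge> 0" using t0 i0p by simp
      ultimately have "s j < 0" by (simp add: s_def)
      thus ?thesis using 2 by simp
    next
      case 3
      have "s j \<ge> 0"
      proof (cases "\<tau> j > 0")
        case True
        moreover have "j < n" using tn True by (metis leI less_irrefl)
        ultimately have "j \<in> D" using 3 unfolding D_def by blast
        hence "\<sigma> i0 * \<tau> j \<le> \<sigma> j * \<tau> i0" using i0 by blast
        thus ?thesis by (simp add: s_def algebra_simps)
      next
        case False hence "\<tau> j = 0" using t0 by simp
        thus ?thesis using 3 i0p by (simp add: s_def)
      qed
      thus ?thesis using 3 by simp
    qed
  qed
  have conf: "conformal s \<sigma>" unfolding conformal_def using c by blast
  obtain j where "\<sigma> j < 0" using sn by blast
  hence nz: "\<exists>j. s j \<noteq> 0" using c by (metis less_irrefl)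
  have "suppi n s \<subseteq> suppi n \<sigma> - {i0}"
  proof
    fix j assume "j \<in> suppi n s"
    hence "j < n" "s j \<noteq> 0" unfolding suppi_def by auto
    moreover have "\<sigma> j \<noteq> 0" using c \<open>s j \<noteq> 0\<close> by auto
    moreover have "s i0 = 0" by (simp add: s_def)
    ultimately show "j \<in> suppi n \<sigma> - {i0}" unfolding suppi_def by auto
  qed
  moreover have "i0 \<in> suppi n \<sigma>" using i0p unfolding suppi_def by auto
  ultimately have "suppi n s \<subset> suppi n \<sigma>" by blast
  hence "card (suppi n s) < card (suppi n \<sigma>)" using finite_suppi by (rule psubset_card_mono[rotated])
  thus ?thesis using rel nz conf by blast
qed



lemma suppi_neg[simp]: "suppi n (\<lambda>i. - \<sigma> i) = suppi n \<sigma>" unfolding suppi_def by simp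

lemma conformal_negboth: "conformal a b \<Longrightarrow> conformal (\<lambda>i. - a i) (\<lambda>i. - b i)"
  unfolding conformal_def by auto

lemma relv_out: "relv n r w \<sigma> \<Longrightarrow> i \<ge> n \<Longrightarrow> \<sigma> i = 0" unfolding relv_def by auto

lemma sum_supp:
  assumes "S \<subseteq> {..<n}" "\<forall>i\<in>{..<n} - S. f i = 0"
  shows "(\<Sum>i<(n::nat). f i) = (\<Sum>i\<in>S. (f i :: int))"
  by (rule sum.mono_neutral_right) (use assms in auto)

lemma conf:
  assumes vc: "VC n r w"
  shows "relv n r w \<sigma> \<Longrightarrow> \<exists>i. \<sigma> i \<noteq> 0 \<Longrightarrow>
    \<exists>\<sigma>'. relv n r w \<sigma>' \<and> (\<exists>i. \<sigma>' i \<noteq> 0) \<and> conformal \<sigma>' \<sigma> \<and> ((\<forall>i. \<sigma>' i \<ge> 0) \<or> (\<forall>i. \<sigma>' i \<le> 0))"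
proof (induction "card (suppi n \<sigma>)" arbitrary: \<sigma> rule: less_induct)
  case less
  show ?case
  proof (cases "(\<forall>i. \<sigma> i \<ge> 0) \<or> (\<forall>i. \<sigma> i \<le> 0)")
    case True thus ?thesis using less.prems conformal_refl by blast
  next
    case False
    have "\<exists>p. \<sigma> p > 0" "\<exists>q. \<sigma> q < 0" using False by (auto simp: not_le)
    then obtain p q where p: "\<sigma> p > 0" and q: "\<sigma> q < 0" by blast
    define S where "S = suppi n \<sigma>"
    have Sn: "S \<subseteq> {..<n}" and finS: "finite S" unfolding S_def suppi_def by auto
    have pn: "p < n" using relv_out[OF less.prems(1)] p by (metis less_irrefl not_le)
    have "\<not> INDEP r w S"
    proof
      assume ind: "INDEP r w S"
      have "\<forall>j<r. (\<Sum>i\<in>S. \<sigma> i * w i j) = 0"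
      proof (intro allI impI)
        fix j assume "j < r"
        have "(\<Sum>i<n. \<sigma> i * w i j) = (\<Sum>i\<in>S. \<sigma> i * w i j)" using Sn by (intro sum_supp) (auto simp: S_def suppi_def)
        thus "(\<Sum>i\<in>S. \<sigma> i * w i j) = 0" using less.prems(1) \<open>j < r\<close> unfolding relv_def by simp
      qed
      hence "\<forall>i\<in>S. \<sigma> i = 0" using ind unfolding INDEP_def by blast
      moreover have "p \<in> S" using pn p unfolding S_def suppi_def by simp
      ultimately have "\<sigma> p = 0" by blast
      thus False using p by simp
    qed
    hence "\<not> NCS r w S" using vc Sn unfolding VC_def by blast
    then obtain a where a: "\<forall>i\<in>S. a i \<ge> 0" "\<exists>i\<in>S. a i > 0" "\<forall>j<r. (\<Sum>i\<in>S. a i * w i j) = 0"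
      using gordan[OF finS, of r w] unfolding NCS_def by blast
    define \<tau> where "\<tau> i = (if i \<in> S then a i else 0)" for i
    have rt: "relv n r w \<tau>"
      unfolding relv_def
    proof (intro conjI allI impI)
      fix i assume "n \<le> i" thus "\<tau> i = 0" using Sn by (auto simp: \<tau>_def)
    next
      fix j assume "j < r"
      have "(\<Sum>i<n. \<tau> i * w i j) = (\<Sum>i\<in>S. \<tau> i * w i j)" using Sn by (intro sum_supp) (auto simp: \<tau>_def)
      also have "\<dots> = (\<Sum>i\<in>S. a i * w i j)" by (simp add: \<tau>_def)
      finally show "(\<Sum>i<n. \<tau> i * w i j) = 0" using a(3) \<open>j < r\<close> by simp
    qed
    have tnn: "\<forall>i. \<tau> i \<ge> 0" using a(1) by (simp add: \<tau>_def)
    have tsub: "\<forall>i. \<tau> i \<noteq> 0 \<longrightarrow> \<sigma> i \<noteq> 0" by (simp add: \<tau>_def S_def suppi_def)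
    obtain k where k: "k \<in> S" "a k > 0" using a(2) by blast
    have tk: "\<tau> k > 0" using k by (simp add: \<tau>_def)
    have sk: "\<sigma> k \<noteq> 0" using k by (simp add: S_def suppi_def)
    show ?thesis
    proof (cases "\<sigma> k > 0")
      case True
      have "\<exists>s. relv n r w s \<and> (\<exists>j. s j \<noteq> 0) \<and> conformal s \<sigma> \<and> card (suppi n s) < card (suppi n \<sigma>)"
      proof (rule reduce[OF less.prems(1) rt tnn tsub])
        show "\<exists>i. \<tau> i > 0 \<and> \<sigma> i > 0" using tk True by blast
        show "\<exists>j. \<sigma> j < 0" using q by blast
      qed
      then obtain s where s: "relv n r w s" "\<exists>j. s j \<noteq> 0" "conformal s \<sigma>" "card (suppi n s) < card (suppi n \<sigma>)"
        by blast
      obtain \<sigma>' where "relv n r w \<sigma>'" "\<exists>i. \<sigma>' i \<noteq> 0" "conformal \<sigma>' s" "(\<forall>i. \<sigma>' i \<ge> 0) \<or> (\<forall>i. \<sigma>' i \<le> 0)"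
        using less.hyps[OF s(4) s(1) s(2)] by blast
      thus ?thesis using s(3) conformal_trans by blast
    next
      case False
      hence skn: "- \<sigma> k > 0" using sk by simp
      have rn: "relv n r w (\<lambda>i. - \<sigma> i)" using relv_neg[OF less.prems(1)] .
      have tsub': "\<forall>i. \<tau> i \<noteq> 0 \<longrightarrow> - \<sigma> i \<noteq> 0" using tsub by simp
      have "\<exists>s. relv n r w s \<and> (\<exists>j. s j \<noteq> 0) \<and> conformal s (\<lambda>i. - \<sigma> i) \<and> card (suppi n s) < card (suppi n (\<lambda>i. - \<sigma> i))"
      proof (rule reduce[OF rn rt tnn tsub'])
        show "\<exists>i. \<tau> i > 0 \<and> - \<sigma> i > 0" using tk skn by blast
        show "\<exists>j. - \<sigma> j < 0" using p by auto
      qed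
      then obtain s where s: "relv n r w s" "\<exists>j. s j \<noteq> 0" "conformal s (\<lambda>i. - \<sigma> i)" "card (suppi n s) < card (suppi n (\<lambda>i. - \<sigma> i))"
        by blast
      have s': "relv n r w (\<lambda>i. - s i)" "\<exists>j. - s j \<noteq> 0" "conformal (\<lambda>i. - s i) \<sigma>" "card (suppi n (\<lambda>i. - s i)) < card (suppi n \<sigma>)"
        using relv_neg[OF s(1)] s(2) conformal_neg[OF s(3)] s(4) by auto
      obtain \<sigma>' where "relv n r w \<sigma>'" "\<exists>i. \<sigma>' i \<noteq> 0" "conformal \<sigma>' (\<lambda>i. - s i)" "(\<forall>i. \<sigma>' i \<ge> 0) \<or> (\<forall>i. \<sigma>' i \<le> 0)"
        using less.hyps[OF s'(4) s'(1) s'(2)] by blast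
      thus ?thesis using s'(3) conformal_trans by blast
    qed
  qed
qed


lemma posrel_step:
  assumes rr: "relv n r w \<rho>" and rs: "relv n r w \<sigma>" and snn: "\<forall>i. \<sigma> i \<ge> 0"
    and sp: "\<exists>i. \<sigma> i \<noteq> 0" and cf: "conformal \<sigma> \<rho>"
    and IH: "\<And>\<rho>''. card (suppi n \<rho>'') < card (suppi n \<rho>) \<Longrightarrow> relv n r w \<rho>'' \<Longrightarrow> relv n r w (\<lambda>i. max (\<rho>'' i) 0)"
  shows "relv n r w (\<lambda>i. max (\<rho> i) 0)"
proof -
  define D where "D = {i. i < n \<and> \<sigma> i > 0}"
  have sout: "\<sigma> i = 0" if "i \<ge> n" for i using relv_out[OF rs that] .
  have rout: "\<rho> i = 0" if "i \<ge> n" for i using relv_out[OF rr that] .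
  have sr: "\<sigma> i > 0 \<Longrightarrow> \<rho> i > 0" for i using cf unfolding conformal_def by blast
  have "D \<noteq> {}"
  proof -
    obtain i where i: "\<sigma> i \<noteq> 0" using sp by blast
    hence "\<sigma> i > 0" using snn by (metis less_le)
    moreover have "i < n" using sout i by (metis not_le)
    ultimately show ?thesis unfolding D_def by blast
  qed
  moreover have "finite D" unfolding D_def by auto
  moreover have "\<forall>j\<in>D. \<sigma> j > 0" unfolding D_def by auto
  ultimately obtain i0 where i0: "i0 \<in> D" "\<forall>j\<in>D. \<rho> i0 * \<sigma> j \<le> \<rho> j * \<sigma> i0"
    using min_ratio[of D \<sigma> \<rho>] by blast
  have i0p: "i0 < n" "\<sigma> i0 > 0" "\<rho> i0 > 0" using i0(1) sr unfolding D_def by auto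
  define s where "s j = \<sigma> i0 * \<rho> j + (- \<rho> i0) * \<sigma> j" for j
  have rel: "relv n r w s" unfolding s_def by (rule relv_lin[OF rr rs])
  have szero: "\<rho> j = 0 \<Longrightarrow> s j = 0" for j
  proof -
    assume "\<rho> j = 0"
    hence "\<sigma> j = 0" using sr snn by (metis less_le less_irrefl)
    thus "s j = 0" using \<open>\<rho> j = 0\<close> by (simp add: s_def)
  qed
  have "suppi n s \<subseteq> suppi n \<rho> - {i0}"
  proof
    fix j assume "j \<in> suppi n s"
    hence "j < n" "s j \<noteq> 0" unfolding suppi_def by auto
    moreover have "\<rho> j \<noteq> 0" using szero \<open>s j \<noteq> 0\<close> by blast
    moreover have "s i0 = 0" by (simp add: s_def)
    ultimately show "j \<in> suppi n \<rho> - {i0}" unfolding suppi_def by auto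
  qed
  moreover have "i0 \<in> suppi n \<rho>" using i0p unfolding suppi_def by auto
  ultimately have "suppi n s \<subset> suppi n \<rho>" by blast
  hence "card (suppi n s) < card (suppi n \<rho>)" using finite_suppi by (rule psubset_card_mono[rotated])
  hence rp: "relv n r w (\<lambda>i. max (s i) 0)" using IH rel by blast
  have eq: "max (s j) 0 = \<sigma> i0 * max (\<rho> j) 0 + (- \<rho> i0) * \<sigma> j" for j
  proof (cases "\<rho> j > 0")
    case True
    have "s j \<ge> 0"
    proof (cases "\<sigma> j > 0")
      case True
      moreover have "j < n" using rout \<open>\<rho> j > 0\<close> by (metis less_irrefl not_le)
      ultimately have "j \<in> D" unfolding D_def by blast
      hence "\<rho> i0 * \<sigma> j \<le> \<rho> j * \<sigma> i0" using i0 by blast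
      thus ?thesis by (simp add: s_def algebra_simps)
    next
      case False hence "\<sigma> j = 0" using snn by (metis less_le)
      thus ?thesis using True i0p by (simp add: s_def)
    qed
    thus ?thesis using True by (simp add: s_def)
  next
    case False
    hence "\<sigma> j = 0" using sr snn by (metis less_le)
    moreover have "\<sigma> i0 * \<rho> j \<le> 0" using False i0p by (simp add: mult_nonneg_nonpos)
    ultimately show ?thesis using False by (simp add: s_def)
  qed
  show ?thesis unfolding relv_def
  proof (intro conjI allI impI)
    fix i assume "n \<le> i" thus "max (\<rho> i) 0 = 0" using rout by simp
  next
    fix j assume j: "j < r"
    have "(\<Sum>i<n. max (s i) 0 * w i j) = 0" using rp j unfolding relv_def by blast
    hence "(\<Sum>i<n. (\<sigma> i0 * max (\<rho> i) 0 + (- \<rho> i0) * \<sigma> i) * w i j) = 0" unfolding eq .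
    hence "\<sigma> i0 * (\<Sum>i<n. max (\<rho> i) 0 * w i j) - \<rho> i0 * (\<Sum>i<n. \<sigma> i * w i j) = 0"
      by (simp add: algebra_simps sum.distrib sum_distrib_left sum_subtractf)
    moreover have "(\<Sum>i<n. \<sigma> i * w i j) = 0" using rs j unfolding relv_def by blast
    ultimately show "(\<Sum>i<n. max (\<rho> i) 0 * w i j) = 0" using i0p by simp
  qed
qed

lemma posrel:
  assumes vc: "VC n r w"
  shows "relv n r w \<rho> \<Longrightarrow> relv n r w (\<lambda>i. max (\<rho> i) 0)"
proof (induction "card (suppi n \<rho>)" arbitrary: \<rho> rule: less_induct)
  case less
  show ?case
  proof (cases "\<forall>i. \<rho> i \<ge> 0")
    case True
    hence "(\<lambda>i. max (\<rho> i) 0) = \<rho>" by (simp add: fun_eq_iff)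
    thus ?thesis using less.prems by simp
  next
    case F1: False
    show ?thesis
    proof (cases "\<forall>i. \<rho> i \<le> 0")
      case True
      hence "(\<lambda>i. max (\<rho> i) 0) = (\<lambda>_. 0)" by (simp add: fun_eq_iff)
      thus ?thesis using relv_zero by simp
    next
      case False
      hence "\<exists>i. \<rho> i \<noteq> 0" by force
      then obtain \<sigma> where \<sigma>: "relv n r w \<sigma>" "\<exists>i. \<sigma> i \<noteq> 0" "conformal \<sigma> \<rho>" "(\<forall>i. \<sigma> i \<ge> 0) \<or> (\<forall>i. \<sigma> i \<le> 0)"
        using conf[OF vc less.prems] by blast
      show ?thesis
      proof (cases "\<forall>i. \<sigma> i \<ge> 0")
        case True
        show ?thesis by (rule posrel_step[OF less.prems \<sigma>(1) True \<sigma>(2) \<sigma>(3)]) (use less.hyps in blast)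
      next
        case False
        hence "\<forall>i. \<sigma> i \<le> 0" using \<sigma>(4) by blast
        hence sn: "\<forall>i. - \<sigma> i \<ge> 0" by simp
        have negp: "relv n r w (\<lambda>i. max (- \<rho> i) 0)"
        proof (rule posrel_step[OF relv_neg[OF less.prems] relv_neg[OF \<sigma>(1)] sn])
          show "\<exists>i. - \<sigma> i \<noteq> 0" using \<sigma>(2) by simp
          show "conformal (\<lambda>i. - \<sigma> i) (\<lambda>i. - \<rho> i)" using conformal_negboth[OF \<sigma>(3)] .
        next
          fix \<rho>'' assume "card (suppi n \<rho>'') < card (suppi n (\<lambda>i. - \<rho> i))" "relv n r w \<rho>''"
          thus "relv n r w (\<lambda>i. max (\<rho>'' i) 0)" using less.hyps by simp
        qed
        have e: "(\<lambda>i. max (\<rho> i) 0) = (\<lambda>i. 1 * \<rho> i + 1 * max (- \<rho> i) 0)"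
          by (rule ext) (simp add: max_def)
        show ?thesis unfolding e by (rule relv_lin[OF less.prems negp])
      qed
    qed
  qed
qed



definition CLOSEDW :: "nat \<Rightarrow> (nat \<Rightarrow> nat \<Rightarrow> int) \<Rightarrow> nat set \<Rightarrow> bool" where
  "CLOSEDW r W S \<longleftrightarrow> \<not> (\<exists>l. (\<forall>i\<in>S. dotv r l (W i) \<ge> 0) \<and> (\<exists>i\<in>S. dotv r l (W i) > 0))"

lemma dot_swap: "(\<Sum>i<n. c i * dotv r l (w i)) = (\<Sum>j<r. l j * (\<Sum>i<n. c i * w i j))"
  unfolding dotv_def by (simp add: sum_distrib_left sum_distrib_right mult_ac) (rule sum.swap)

lemma B_comb:
  assumes vc: "VC n r w" and Sx: "Sx \<subseteq> {..<n}"
    and hg: "\<forall>k\<in>Sx \<inter> Sy. \<exists>\<gamma>. relv n r w \<gamma> \<and> (\<forall>i. \<gamma> i \<noteq> 0 \<longrightarrow> i \<in> Sx) \<and> \<gamma> k \<noteq> 0"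
    and hr: "\<exists>\<rho>. relv n r w \<rho> \<and> (\<forall>i. i \<notin> Sx \<longrightarrow> \<rho> i \<le> 0) \<and> (\<forall>i\<in>Sx - Sy. \<rho> i > 0)"
  shows "CLOSEDW r w Sx"
  unfolding CLOSEDW_def
proof
  assume "\<exists>l. (\<forall>i\<in>Sx. dotv r l (w i) \<ge> 0) \<and> (\<exists>i\<in>Sx. dotv r l (w i) > 0)"
  then obtain l k where l: "\<forall>i\<in>Sx. dotv r l (w i) \<ge> 0" and k: "k \<in> Sx" "dotv r l (w k) > 0" by blast
  obtain \<rho> where \<rho>: "relv n r w \<rho>" "\<forall>i. i \<notin> Sx \<longrightarrow> \<rho> i \<le> 0" "\<forall>i\<in>Sx - Sy. \<rho> i > 0" using hr by blast
  have "\<exists>\<rho>'. relv n r w \<rho>' \<and> (\<forall>i. i \<notin> Sx \<longrightarrow> \<rho>' i \<le> 0) \<and> \<rho>' k > 0"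
  proof (cases "k \<in> Sy")
    case False thus ?thesis using \<rho> k by blast
  next
    case True
    then obtain \<gamma> where \<gamma>: "relv n r w \<gamma>" "\<forall>i. \<gamma> i \<noteq> 0 \<longrightarrow> i \<in> Sx" "\<gamma> k \<noteq> 0" using hg k by blast
    define g where "g i = (if \<gamma> k > 0 then \<gamma> i else - \<gamma> i)" for i
    have g: "relv n r w g" "\<forall>i. g i \<noteq> 0 \<longrightarrow> i \<in> Sx" "g k > 0"
    proof -
      show "relv n r w g" unfolding g_def using \<gamma>(1) relv_neg[OF \<gamma>(1)] by (cases "\<gamma> k > 0") auto
      show "\<forall>i. g i \<noteq> 0 \<longrightarrow> i \<in> Sx" using \<gamma>(2) by (auto simp: g_def)
      show "g k > 0" using \<gamma>(3) by (auto simp: g_def)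
    qed
    define M where "M = \<bar>\<rho> k\<bar> + 1"
    define \<rho>' where "\<rho>' i = 1 * \<rho> i + M * g i" for i
    have "relv n r w \<rho>'" unfolding \<rho>'_def by (rule relv_lin[OF \<rho>(1) g(1)])
    moreover have "\<forall>i. i \<notin> Sx \<longrightarrow> \<rho>' i \<le> 0"
    proof (intro allI impI)
      fix i assume "i \<notin> Sx"
      hence "g i = 0" "\<rho> i \<le> 0" using \<rho>(2) g(2) by blast+
      thus "\<rho>' i \<le> 0" by (simp add: \<rho>'_def)
    qed
    moreover have "\<rho>' k > 0"
    proof -
      have "M * g k \<ge> M" using g(3) by (simp add: M_def)
      thus ?thesis unfolding \<rho>'_def M_def by linarith
    qed
    ultimately show ?thesis by blast
  qed
  then obtain \<rho>' where \<rho>': "relv n r w \<rho>'" "\<forall>i. i \<notin> Sx \<longrightarrow> \<rho>' i \<le> 0" "\<rho>' k > 0" by blast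
  have rp: "relv n r w (\<lambda>i. max (\<rho>' i) 0)" using posrel[OF vc \<rho>'(1)] .
  have "(\<Sum>i<n. max (\<rho>' i) 0 * dotv r l (w i)) = (\<Sum>j<r. l j * (\<Sum>i<n. max (\<rho>' i) 0 * w i j))"
    by (rule dot_swap)
  also have "\<dots> = 0" using rp unfolding relv_def by simp
  finally have s0: "(\<Sum>i<n. max (\<rho>' i) 0 * dotv r l (w i)) = 0" .
  have nn: "\<forall>i\<in>{..<n}. max (\<rho>' i) 0 * dotv r l (w i) \<ge> 0"
  proof
    fix i assume "i \<in> {..<n}"
    show "max (\<rho>' i) 0 * dotv r l (w i) \<ge> 0"
    proof (cases "\<rho>' i > 0")
      case True
      hence "i \<in> Sx" using \<rho>'(2) by (metis not_le)
      thus ?thesis using l True by simp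
    next
      case False thus ?thesis by simp
    qed
  qed
  have "k \<in> {..<n}" using k Sx by blast
  moreover have "max (\<rho>' k) 0 * dotv r l (w k) > 0" using \<rho>'(3) k by simp
  ultimately have "(\<Sum>i<n. max (\<rho>' i) 0 * dotv r l (w i)) > 0"
    using nn by (intro sum_pos2[where i=k]) auto
  thus False using s0 by simp
qed


lemma dotv_negv: "dotv r l (\<lambda>j. - v j) = - dotv r l (v :: nat \<Rightarrow> int)"
  unfolding dotv_def by (simp add: sum_negf)

lemma kq:
  fixes c :: "nat \<Rightarrow> 'a::field_char_0"
  assumes I: "I \<subseteq> {..<n}" "k \<in> I" and cnz: "\<forall>i\<in>I. c i \<noteq> 0"
    and rel: "\<forall>j<r. (\<Sum>i\<in>I. c i * of_int (w i j)) = 0"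
  shows "\<exists>\<gamma>. relv n r w \<gamma> \<and> (\<forall>i. \<gamma> i \<noteq> 0 \<longrightarrow> i \<in> I) \<and> \<gamma> k \<noteq> 0"
proof -
  have finI: "finite I" by (rule finite_subset[OF I(1)]) simp
  define v where "v x = (if even x then w (x div 2) else (\<lambda>j. - w (x div 2) j))" for x
  have v1: "v (2 * i) = w i" for i by (simp add: v_def)
  have v2: "v (2 * i + 1) = (\<lambda>j. - w i j)" "v (Suc (2 * i)) = (\<lambda>j. - w i j)" for i by (simp_all add: v_def)
  define J where "J = (\<lambda>i. 2 * i) ` I \<union> (\<lambda>i. 2 * i + 1) ` (I - {k})"
  have finJ: "finite J" unfolding J_def using finI by auto
  have EJ: "{2 * k} \<subseteq> J" unfolding J_def using I(2) by auto
  have disj: "(\<lambda>i. 2 * i) ` I \<inter> (\<lambda>i. 2 * i + 1) ` (I - {k}) = {}" by auto presburger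
  have sumJ: "(\<Sum>x\<in>J. f x) = (\<Sum>i\<in>I. f (2 * i)) + (\<Sum>i\<in>I - {k}. f (2 * i + 1))" for f :: "nat \<Rightarrow> 'b::comm_monoid_add"
  proof -
    have "(\<Sum>x\<in>J. f x) = (\<Sum>x\<in>(\<lambda>i. 2 * i) ` I. f x) + (\<Sum>x\<in>(\<lambda>i. 2 * i + 1) ` (I - {k}). f x)"
      unfolding J_def using finI disj by (intro sum.union_disjoint) auto
    also have "(\<Sum>x\<in>(\<lambda>i. 2 * i) ` I. f x) = (\<Sum>i\<in>I. f (2 * i))" by (subst sum.reindex) (auto simp: inj_on_def)
    also have "(\<Sum>x\<in>(\<lambda>i. 2 * i + 1) ` (I - {k}). f x) = (\<Sum>i\<in>I - {k}. f (2 * i + 1))" by (subst sum.reindex) (auto simp: inj_on_def)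
    finally show ?thesis .
  qed
  from motzkin_int[OF finJ EJ, of r v] show ?thesis
  proof
    assume "\<exists>l. (\<forall>i\<in>J. dotv r l (v i) \<ge> 0) \<and> (\<forall>i\<in>{2 * k}. dotv r l (v i) > 0)"
    then obtain l where l1: "\<forall>x\<in>J. dotv r l (v x) \<ge> 0" and l2: "dotv r l (w k) > 0" using v1 by auto
    have z: "dotv r l (w i) = 0" if "i \<in> I - {k}" for i
    proof -
      have "2 * i \<in> J" "2 * i + 1 \<in> J" using that unfolding J_def by auto
      hence "dotv r l (w i) \<ge> 0" "dotv r l (\<lambda>j. - w i j) \<ge> 0" using l1 v1 v2 by metis+
      thus ?thesis by (simp add: dotv_negv)
    qed
    have "(\<Sum>i\<in>I. c i * of_int (dotv r l (w i))) = (\<Sum>j<r. of_int (l j) * (\<Sum>i\<in>I. c i * of_int (w i j)))"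
      unfolding dotv_def by (simp add: sum_distrib_left sum_distrib_right mult_ac) (rule sum.swap)
    also have "\<dots> = 0" using rel by simp
    finally have s0: "(\<Sum>i\<in>I. c i * of_int (dotv r l (w i))) = 0" .
    have "(\<Sum>i\<in>I. c i * of_int (dotv r l (w i))) = c k * of_int (dotv r l (w k)) + (\<Sum>i\<in>I - {k}. c i * of_int (dotv r l (w i)))"
      using finI I(2) by (simp add: sum.remove)
    also have "(\<Sum>i\<in>I - {k}. c i * of_int (dotv r l (w i))) = 0" using z by simp
    finally have "c k * of_int (dotv r l (w k)) = (0::'a)" using s0 by simp
    moreover have "c k \<noteq> 0" using cnz I(2) by blast
    moreover have "(of_int (dotv r l (w k)) :: 'a) \<noteq> 0" using l2 by simp
    ultimately show ?thesis by simp
  next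
    assume "\<exists>a. (\<forall>i\<in>J. a i \<ge> 0) \<and> (\<exists>i\<in>{2 * k}. a i > 0) \<and> (\<forall>j<r. (\<Sum>i\<in>J. a i * v i j) = 0)"
    then obtain a where a1: "a (2 * k) > 0" and a2: "\<forall>j<r. (\<Sum>x\<in>J. a x * v x j) = 0" by auto
    define \<gamma> where "\<gamma> i = (if i \<in> I then a (2 * i) - (if i = k then 0 else a (2 * i + 1)) else 0)" for i
    have "relv n r w \<gamma>" unfolding relv_def
    proof (intro conjI allI impI)
      fix i assume "n \<le> i" thus "\<gamma> i = 0" using I(1) by (auto simp: \<gamma>_def)
    next
      fix j assume j: "j < r"
      have "(\<Sum>i<n. \<gamma> i * w i j) = (\<Sum>i\<in>I. \<gamma> i * w i j)" using I(1) by (intro sum_supp) (auto simp: \<gamma>_def)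
      also have "\<dots> = (\<Sum>i\<in>I. a (2 * i) * w i j) - (\<Sum>i\<in>I. (if i = k then 0 else a (2 * i + 1)) * w i j)"
        by (simp add: \<gamma>_def left_diff_distrib sum_subtractf)
      also have "(\<Sum>i\<in>I. (if i = k then 0 else a (2 * i + 1)) * w i j) = (\<Sum>i\<in>I - {k}. a (2 * i + 1) * w i j)"
        using finI I(2) by (simp add: sum.remove)
      also have "(\<Sum>i\<in>I. a (2 * i) * w i j) - (\<Sum>i\<in>I - {k}. a (2 * i + 1) * w i j) = (\<Sum>x\<in>J. a x * v x j)"
        unfolding sumJ by (simp add: v1 v2 sum_negf)
      finally show "(\<Sum>i<n. \<gamma> i * w i j) = 0" using a2 j by simp
    qed
    moreover have "\<forall>i. \<gamma> i \<noteq> 0 \<longrightarrow> i \<in> I" by (simp add: \<gamma>_def)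
    moreover have "\<gamma> k \<noteq> 0" using a1 I(2) by (simp add: \<gamma>_def)
    ultimately show ?thesis by blast
  qed
qed



lemma pair_aspace: "x \<in> aspace n \<Longrightarrow> y \<in> aspace n \<Longrightarrow> pair_vec n x y \<in> aspace (2 * n)"
  unfolding aspace_def pair_vec_def by auto

lemma pair_supp:
  assumes "x \<in> aspace n" "y \<in> aspace n"
  shows "suppv (2 * n) (pair_vec n x y) = suppv n x \<union> (\<lambda>i. i + n) ` suppv n y"
proof
  show "suppv (2 * n) (pair_vec n x y) \<subseteq> suppv n x \<union> (\<lambda>i. i + n) ` suppv n y"
  proof
    fix i assume i: "i \<in> suppv (2 * n) (pair_vec n x y)"
    show "i \<in> suppv n x \<union> (\<lambda>i. i + n) ` suppv n y"
    proof (cases "i < n")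
      case True thus ?thesis using i by (auto simp: suppv_def pair_vec_def)
    next
      case False
      hence "i = (i - n) + n" "i - n < n" "y (i - n) \<noteq> 0" using i by (auto simp: suppv_def pair_vec_def)
      hence "i - n \<in> suppv n y" by (simp add: suppv_def)
      hence "(i - n) + n \<in> (\<lambda>i. i + n) ` suppv n y" by (rule imageI)
      thus ?thesis using \<open>i = (i - n) + n\<close> by simp
    qed
  qed
next
  show "suppv n x \<union> (\<lambda>i. i + n) ` suppv n y \<subseteq> suppv (2 * n) (pair_vec n x y)"
    by (auto simp: suppv_def pair_vec_def)
qed

lemma sw_lo: "i < n \<Longrightarrow> sum_weights n w i = w i" by (simp add: sum_weights_def)
lemma sw_hi: "sum_weights n w (i + n) = dual_weights w i" by (simp add: sum_weights_def)
lemma dotv_dual: "dotv r l (dual_weights w i) = - dotv r l (w i)"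
  unfolding dotv_def dual_weights_def by (simp add: sum_negf)

lemma relv_dual: "relv n r (dual_weights w) \<rho> \<longleftrightarrow> relv n r w \<rho>"
  unfolding relv_def dual_weights_def by (simp add: sum_negf)

lemma vc_dual: "VC n r w \<Longrightarrow> VC n r (dual_weights w)"
  unfolding VC_def
proof (intro allI impI)
  fix S assume vc: "\<forall>S\<subseteq>{..<n}. NCS r w S \<longrightarrow> INDEP r w S" and S: "S \<subseteq> {..<n}" and nc: "NCS r (dual_weights w) S"
  from nc obtain l where l: "\<forall>i\<in>S. dotv r l (dual_weights w i) > 0" unfolding NCS_def by blast
  have e: "dotv r (\<lambda>j. - l j) (w i) = dotv r l (dual_weights w i)" for i
    by (simp add: dotv_def dual_weights_def)
  have "\<forall>i\<in>S. dotv r (\<lambda>j. - l j) (w i) > 0" using l unfolding e .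
  hence "NCS r w S" unfolding NCS_def by blast
  hence ind: "INDEP r w S" using vc S by blast
  show "INDEP r (dual_weights w) S" unfolding INDEP_def
  proof (intro allI impI)
    fix b assume "\<forall>j<r. (\<Sum>i\<in>S. b i * dual_weights w i j) = 0"
    hence "\<forall>j<r. (\<Sum>i\<in>S. b i * w i j) = 0" by (simp add: dual_weights_def sum_negf)
    thus "\<forall>i\<in>S. b i = 0" using ind unfolding INDEP_def by blast
  qed
qed

lemma sum_if_sub: "S \<subseteq> {..<(n::nat)} \<Longrightarrow> (\<Sum>i<n. (if i \<in> S then g i else 0)) = (\<Sum>i\<in>S. (g i :: int))"
  by (simp add: sum.inter_restrict[symmetric] Int_absorb1 sum.If_cases inf.absorb2)

lemma union_closed:
  assumes Sx: "Sx \<subseteq> {..<n}" and cx: "CLOSEDW r w Sx" and cy: "CLOSEDW r (dual_weights w) Sy"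
  shows "CLOSEDW r (sum_weights n w) (Sx \<union> (\<lambda>i. i + n) ` Sy)"
  unfolding CLOSEDW_def
proof
  assume "\<exists>l. (\<forall>i\<in>Sx \<union> (\<lambda>i. i + n) ` Sy. dotv r l (sum_weights n w i) \<ge> 0) \<and> (\<exists>i\<in>Sx \<union> (\<lambda>i. i + n) ` Sy. dotv r l (sum_weights n w i) > 0)"
  then obtain l where l1: "\<forall>i\<in>Sx \<union> (\<lambda>i. i + n) ` Sy. dotv r l (sum_weights n w i) \<ge> 0"
    and l2: "\<exists>i\<in>Sx \<union> (\<lambda>i. i + n) ` Sy. dotv r l (sum_weights n w i) > 0" by blast
  have a: "\<forall>i\<in>Sx. dotv r l (w i) \<ge> 0"
  proof
    fix i assume i: "i \<in> Sx"
    hence "i < n" using Sx by blast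
    hence "sum_weights n w i = w i" by (rule sw_lo)
    thus "dotv r l (w i) \<ge> 0" using l1 i by (metis UnI1)
  qed
  have b: "\<forall>i\<in>Sy. dotv r l (dual_weights w i) \<ge> 0"
  proof
    fix i assume i: "i \<in> Sy"
    hence "i + n \<in> Sx \<union> (\<lambda>i. i + n) ` Sy" by blast
    thus "dotv r l (dual_weights w i) \<ge> 0" using l1 sw_hi by metis
  qed
  from l2 show False
  proof
    fix i assume i: "i \<in> Sx \<union> (\<lambda>i. i + n) ` Sy" "dotv r l (sum_weights n w i) > 0"
    show False
    proof (cases "i \<in> Sx")
      case True
      hence "i < n" using Sx by blast
      hence "sum_weights n w i = w i" by (rule sw_lo)
      hence "dotv r l (w i) > 0" using i by simp
      thus False using cx a True unfolding CLOSEDW_def by blast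
    next
      case False
      then obtain i' where "i' \<in> Sy" "i = i' + n" using i by blast
      hence "dotv r l (dual_weights w i') > 0" "i' \<in> Sy" using i sw_hi by auto
      thus False using cy b unfolding CLOSEDW_def by blast
    qed
  qed
qed

lemma split_closed:
  assumes vc: "VC n r w" and Sx: "Sx \<subseteq> {..<n}" and Sy: "Sy \<subseteq> {..<n}"
    and cl: "CLOSEDW r (sum_weights n w) (Sx \<union> (\<lambda>i. i + n) ` Sy)"
    and hg: "\<forall>k\<in>Sx \<inter> Sy. \<exists>\<gamma>. relv n r w \<gamma> \<and> (\<forall>i. \<gamma> i \<noteq> 0 \<longrightarrow> i \<in> Sx \<inter> Sy) \<and> \<gamma> k \<noteq> 0"
  shows "CLOSEDW r w Sx \<and> CLOSEDW r (dual_weights w) Sy"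
proof -
  define Sp where "Sp = Sx \<union> (\<lambda>i. i + n) ` Sy"
  have finx: "finite Sx" by (rule finite_subset[OF Sx]) simp
  have finy: "finite Sy" by (rule finite_subset[OF Sy]) simp
  have finp: "finite Sp" unfolding Sp_def using finx finy by simp
  obtain A where A: "\<forall>i\<in>Sp. A i > 0" "\<forall>j<r. (\<Sum>i\<in>Sp. A i * sum_weights n w i j) = 0"
    using stiemke[OF finp, of r "sum_weights n w"] cl unfolding CLOSEDW_def Sp_def by blast
  define \<rho> where "\<rho> i = (if i \<in> Sx then A i else 0) - (if i \<in> Sy then A (i + n) else 0)" for i
  have disj: "Sx \<inter> (\<lambda>i. i + n) ` Sy = {}" using Sx by auto
  have rel: "relv n r w \<rho>" unfolding relv_def
  proof (intro conjI allI impI)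
    fix i assume "n \<le> i" thus "\<rho> i = 0" using Sx Sy by (auto simp: \<rho>_def)
  next
    fix j assume j: "j < r"
    have pw: "\<rho> i * w i j = (if i \<in> Sx then A i * w i j else 0) - (if i \<in> Sy then A (i + n) * w i j else 0)" for i
      by (simp add: \<rho>_def left_diff_distrib)
    have "(\<Sum>i<n. \<rho> i * w i j) = (\<Sum>i<n. (if i \<in> Sx then A i * w i j else 0)) - (\<Sum>i<n. (if i \<in> Sy then A (i + n) * w i j else 0))"
      unfolding pw by (rule sum_subtractf)
    also have "\<dots> = (\<Sum>i\<in>Sx. A i * w i j) - (\<Sum>i\<in>Sy. A (i + n) * w i j)"
      using sum_if_sub[OF Sx] sum_if_sub[OF Sy] by simp
    also have "\<dots> = (\<Sum>i\<in>Sp. A i * sum_weights n w i j)"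
    proof -
      have "(\<Sum>i\<in>Sp. A i * sum_weights n w i j) = (\<Sum>i\<in>Sx. A i * sum_weights n w i j) + (\<Sum>i\<in>(\<lambda>i. i + n) ` Sy. A i * sum_weights n w i j)"
        unfolding Sp_def using finx finy disj by (intro sum.union_disjoint) auto
      also have "(\<Sum>i\<in>Sx. A i * sum_weights n w i j) = (\<Sum>i\<in>Sx. A i * w i j)" using Sx sw_lo by (intro sum.cong) auto
      also have "(\<Sum>i\<in>(\<lambda>i. i + n) ` Sy. A i * sum_weights n w i j) = (\<Sum>i\<in>Sy. A (i + n) * dual_weights w i j)"
        by (subst sum.reindex) (auto simp: inj_on_def sw_hi)
      also have "\<dots> = - (\<Sum>i\<in>Sy. A (i + n) * w i j)" by (simp add: dual_weights_def sum_negf)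
      finally show ?thesis by simp
    qed
    finally show "(\<Sum>i<n. \<rho> i * w i j) = 0" using A(2) j by simp
  qed
  have Ax: "A i > 0" if "i \<in> Sx" for i using A(1) that unfolding Sp_def by blast
  have Ay: "A (i + n) > 0" if "i \<in> Sy" for i using A(1) that unfolding Sp_def by blast
  have Ap: "A i \<ge> 0" if "i \<in> Sx" for i using Ax[OF that] by simp
  have cx: "CLOSEDW r w Sx"
  proof (rule B_comb[OF vc Sx])
    show "\<forall>k\<in>Sx \<inter> Sy. \<exists>\<gamma>. relv n r w \<gamma> \<and> (\<forall>i. \<gamma> i \<noteq> 0 \<longrightarrow> i \<in> Sx) \<and> \<gamma> k \<noteq> 0" using hg by blast
    have "\<forall>i. i \<notin> Sx \<longrightarrow> \<rho> i \<le> 0" using Ay by (auto simp: \<rho>_def less_imp_le)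
    moreover have "\<forall>i\<in>Sx - Sy. \<rho> i > 0" using Ax by (auto simp: \<rho>_def)
    ultimately show "\<exists>\<rho>. relv n r w \<rho> \<and> (\<forall>i. i \<notin> Sx \<longrightarrow> \<rho> i \<le> 0) \<and> (\<forall>i\<in>Sx - Sy. \<rho> i > 0)" using rel by blast
  qed
  have cy: "CLOSEDW r (dual_weights w) Sy"
  proof (rule B_comb[OF vc_dual[OF vc] Sy])
    show "\<forall>k\<in>Sy \<inter> Sx. \<exists>\<gamma>. relv n r (dual_weights w) \<gamma> \<and> (\<forall>i. \<gamma> i \<noteq> 0 \<longrightarrow> i \<in> Sy) \<and> \<gamma> k \<noteq> 0"
    proof
      fix k assume "k \<in> Sy \<inter> Sx"
      then obtain \<gamma> where "relv n r w \<gamma>" "\<forall>i. \<gamma> i \<noteq> 0 \<longrightarrow> i \<in> Sx \<inter> Sy" "\<gamma> k \<noteq> 0" using hg by blast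
      thus "\<exists>\<gamma>. relv n r (dual_weights w) \<gamma> \<and> (\<forall>i. \<gamma> i \<noteq> 0 \<longrightarrow> i \<in> Sy) \<and> \<gamma> k \<noteq> 0"
        unfolding relv_dual by blast
    qed
    have "relv n r (dual_weights w) (\<lambda>i. - \<rho> i)" using relv_neg[OF rel] by (simp add: relv_dual)
    moreover have "\<forall>i. i \<notin> Sy \<longrightarrow> - \<rho> i \<le> 0" using Ap by (auto simp: \<rho>_def)
    moreover have "\<forall>i\<in>Sy - Sx. - \<rho> i > 0" using Ay by (auto simp: \<rho>_def)
    ultimately show "\<exists>\<rho>. relv n r (dual_weights w) \<rho> \<and> (\<forall>i. i \<notin> Sy \<longrightarrow> \<rho> i \<le> 0) \<and> (\<forall>i\<in>Sy - Sx. \<rho> i > 0)" by blast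
  qed
  show ?thesis using cx cy by blast
qed



lemma sum_if_sub': "S \<subseteq> {..<(n::nat)} \<Longrightarrow> (\<Sum>i<n. (if i \<in> S then g i else 0)) = (\<Sum>i\<in>S. (g i :: 'a::comm_monoid_add))"
  by (simp add: sum.inter_restrict[symmetric] inf.absorb2)

lemma moment_rel:
  assumes "(x, y) \<in> moment_zero n r w" "j < r"
  shows "(\<Sum>i<n. x i * y i * of_int (w i j)) = (0::'a::field)"
proof -
  define \<xi> where "\<xi> = (\<lambda>j'. if j' = j then 1 else (0::'a))"
  have "\<xi> \<in> aspace r" using assms(2) by (auto simp: \<xi>_def aspace_def)
  hence "moment n r w x y \<xi> = 0" using assms(1) by (auto simp: moment_zero_def)
  moreover have "lie_act n r w \<xi> x i = (if i < n then of_int (w i j) * x i else 0)" for i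
    using assms(2) by (simp add: lie_act_def \<xi>_def if_distrib cong: if_cong)
  ultimately show ?thesis unfolding moment_def by (simp add: mult_ac)
qed

lemma gamma_hyp:
  fixes x y :: "nat \<Rightarrow> 'a::field_char_0"
  assumes xy: "(x, y) \<in> moment_zero n r w"
  shows "\<forall>k\<in>suppv n x \<inter> suppv n y. \<exists>\<gamma>. relv n r w \<gamma> \<and> (\<forall>i. \<gamma> i \<noteq> 0 \<longrightarrow> i \<in> suppv n x \<inter> suppv n y) \<and> \<gamma> k \<noteq> 0"
proof
  fix k assume k: "k \<in> suppv n x \<inter> suppv n y"
  define I where "I = suppv n x \<inter> suppv n y"
  have I: "I \<subseteq> {..<n}" unfolding I_def suppv_def by auto
  have cnz: "\<forall>i\<in>I. x i * y i \<noteq> 0" unfolding I_def suppv_def by auto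
  have rel: "\<forall>j<r. (\<Sum>i\<in>I. x i * y i * of_int (w i j)) = 0"
  proof (intro allI impI)
    fix j assume j: "j < r"
    have "(\<Sum>i<n. x i * y i * of_int (w i j)) = (\<Sum>i\<in>I. x i * y i * of_int (w i j))"
      by (rule sum.mono_neutral_right) (use I in \<open>auto simp: I_def suppv_def\<close>)
    thus "(\<Sum>i\<in>I. x i * y i * of_int (w i j)) = 0" using moment_rel[OF xy j] by simp
  qed
  show "\<exists>\<gamma>. relv n r w \<gamma> \<and> (\<forall>i. \<gamma> i \<noteq> 0 \<longrightarrow> i \<in> suppv n x \<inter> suppv n y) \<and> \<gamma> k \<noteq> 0"
    using kq[OF I _ cnz rel] k unfolding I_def by blast
qed

lemma mz_aspace: "(x, y) \<in> moment_zero n r w \<Longrightarrow> x \<in> aspace n \<and> y \<in> aspace n"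
  unfolding moment_zero_def by auto

lemma supp_lo: "A \<subseteq> {..<(n::nat)} \<Longrightarrow> (A \<union> (\<lambda>i. i + n) ` B) \<inter> {..<n} = A"
  by auto

lemma suppv_sub: "suppv n x \<subseteq> {..<n}" unfolding suppv_def by auto

theorem proposition3p10:
  fixes n r :: nat and w :: "nat \<Rightarrow> nat \<Rightarrow> int"
  assumes "algebraically_closed TYPE('a::field_char_0)"
  shows "visible n r w TYPE('a) \<longleftrightarrow> (
    {Orb. \<exists>(x, y) \<in> moment_zero n r w.
          Orb = torbit (2 * n) r (sum_weights n w) (pair_vec n x y :: nat \<Rightarrow> 'a)
          \<and> zariski_closed (2 * n) Orb}
    = {torbit (2 * n) r (sum_weights n w) (pair_vec n x y :: nat \<Rightarrow> 'a) | x y.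
          (x, y) \<in> moment_zero n r w
          \<and> zariski_closed n (torbit n r w x)
          \<and> zariski_closed n (torbit n r (dual_weights w) y)})"
  (is "_ \<longleftrightarrow> ?L = ?R")
proof -
  note ac = assms
  have vis: "visible n r w TYPE('a) \<longleftrightarrow> VC n r w" by (rule visible_iff[OF ac])
  have cxi: "zariski_closed n (torbit n r w x) \<longleftrightarrow> CLOSEDW r w (suppv n x)" if "x \<in> aspace n" for x :: "nat \<Rightarrow> 'a"
    using closed_iff[OF ac that] unfolding CLOSEDW_def .
  have cyi: "zariski_closed n (torbit n r (dual_weights w) y) \<longleftrightarrow> CLOSEDW r (dual_weights w) (suppv n y)"
    if "y \<in> aspace n" for y :: "nat \<Rightarrow> 'a"
    using closed_iff[OF ac that] unfolding CLOSEDW_def .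
  have cpi: "zariski_closed (2 * n) (torbit (2 * n) r (sum_weights n w) (pair_vec n x y)) \<longleftrightarrow>
      CLOSEDW r (sum_weights n w) (suppv n x \<union> (\<lambda>i. i + n) ` suppv n y)"
    if "x \<in> aspace n" "y \<in> aspace n" for x y :: "nat \<Rightarrow> 'a"
    using closed_iff[OF ac pair_aspace[OF that]] pair_supp[OF that] unfolding CLOSEDW_def by simp
  have RL: "?R \<subseteq> ?L"
  proof
    fix Orb assume "Orb \<in> ?R"
    then obtain x y where xy: "Orb = torbit (2 * n) r (sum_weights n w) (pair_vec n x y)" "(x, y) \<in> moment_zero n r w"
      "zariski_closed n (torbit n r w x)" "zariski_closed n (torbit n r (dual_weights w) y)" by blast
    have a: "x \<in> aspace n" "y \<in> aspace n" using mz_aspace[OF xy(2)] by auto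
    have "CLOSEDW r (sum_weights n w) (suppv n x \<union> (\<lambda>i. i + n) ` suppv n y)"
      using union_closed[OF suppv_sub] cxi[OF a(1)] cyi[OF a(2)] xy(3,4) by blast
    hence "zariski_closed (2 * n) Orb" using cpi[OF a] xy(1) by simp
    thus "Orb \<in> ?L" using xy(1,2) by blast
  qed
  have LR: "?L \<subseteq> ?R" if vc: "VC n r w"
  proof
    fix Orb assume "Orb \<in> ?L"
    then obtain x y where xy: "(x, y) \<in> moment_zero n r w" "Orb = torbit (2 * n) r (sum_weights n w) (pair_vec n x y)"
      "zariski_closed (2 * n) Orb" by blast
    have a: "x \<in> aspace n" "y \<in> aspace n" using mz_aspace[OF xy(1)] by auto
    have "CLOSEDW r (sum_weights n w) (suppv n x \<union> (\<lambda>i. i + n) ` suppv n y)" using cpi[OF a] xy(2,3) by simp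
    from split_closed[OF vc suppv_sub suppv_sub this gamma_hyp[OF xy(1)]]
    have "zariski_closed n (torbit n r w x)" "zariski_closed n (torbit n r (dual_weights w) y)"
      using cxi[OF a(1)] cyi[OF a(2)] by auto
    thus "Orb \<in> ?R" using xy by blast
  qed
  have NV: "?L \<noteq> ?R" if nvc: "\<not> VC n r w"
  proof -
    obtain S l b i0 where S: "S \<subseteq> {..<n}" and l: "\<forall>i\<in>S. dotv r l (w i) > 0"
      and b: "\<forall>j<r. (\<Sum>i\<in>S. b i * w i j) = 0" and i0: "i0 \<in> S" "b i0 \<noteq> 0"
      using nvc unfolding VC_def NCS_def INDEP_def by blast
    define S' where "S' = {i \<in> S. b i \<noteq> 0}"
    have S'S: "S' \<subseteq> S" and S'n: "S' \<subseteq> {..<n}" using S unfolding S'_def by auto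
    have finS: "finite S" by (rule finite_subset[OF S]) simp
    define x :: "nat \<Rightarrow> 'a" where "x = (\<lambda>i. if i \<in> S' then 1 else 0)"
    define y :: "nat \<Rightarrow> 'a" where "y = (\<lambda>i. if i \<in> S' then of_int (b i) else 0)"
    have xa: "x \<in> aspace n" and ya: "y \<in> aspace n" using S'n unfolding x_def y_def aspace_def by auto
    have sx: "suppv n x = S'" using S'n unfolding x_def suppv_def by auto
    have sy: "suppv n y = S'" using S'n unfolding y_def suppv_def S'_def by auto
    have bS': "(\<Sum>i\<in>S'. b i * w i j) = 0" if "j < r" for j
    proof -
      have "(\<Sum>i\<in>S'. b i * w i j) = (\<Sum>i\<in>S. b i * w i j)"
        by (rule sum.mono_neutral_left) (use finS S'S in \<open>auto simp: S'_def\<close>)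
      thus ?thesis using b that by simp
    qed
    have mz: "(x, y) \<in> moment_zero n r w"
      unfolding moment_zero_def
    proof (clarsimp simp: xa ya)
      fix \<xi> :: "nat \<Rightarrow> 'a"
      have "moment n r w x y \<xi> = (\<Sum>i<n. (if i \<in> S' then of_int (b i) * (\<Sum>j<r. of_int (w i j) * \<xi> j) else 0))"
        unfolding moment_def lie_act_def x_def y_def by (intro sum.cong refl) auto
      also have "\<dots> = (\<Sum>i\<in>S'. of_int (b i) * (\<Sum>j<r. of_int (w i j) * \<xi> j))" by (rule sum_if_sub'[OF S'n])
      also have "\<dots> = (\<Sum>j<r. \<xi> j * of_int (\<Sum>i\<in>S'. b i * w i j))"
        by (simp add: sum_distrib_left sum_distrib_right mult_ac) (rule sum.swap)
      also have "\<dots> = 0" using bS' by simp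
      finally show "moment n r w x y \<xi> = 0" .
    qed
    have pc: "CLOSEDW r (sum_weights n w) (S' \<union> (\<lambda>i. i + n) ` S')"
      unfolding CLOSEDW_def
    proof
      assume "\<exists>l. (\<forall>i\<in>S' \<union> (\<lambda>i. i + n) ` S'. dotv r l (sum_weights n w i) \<ge> 0) \<and> (\<exists>i\<in>S' \<union> (\<lambda>i. i + n) ` S'. dotv r l (sum_weights n w i) > 0)"
      then obtain l' where l1: "\<forall>i\<in>S' \<union> (\<lambda>i. i + n) ` S'. dotv r l' (sum_weights n w i) \<ge> 0"
        and l2: "\<exists>i\<in>S' \<union> (\<lambda>i. i + n) ` S'. dotv r l' (sum_weights n w i) > 0" by blast
      have z: "dotv r l' (w i) = 0" if "i \<in> S'" for i
      proof -
        have "i < n" using that S'n by blast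
        hence "dotv r l' (w i) \<ge> 0" using l1 that sw_lo by (metis UnI1)
        moreover have "i + n \<in> S' \<union> (\<lambda>i. i + n) ` S'" using that by blast
        hence "dotv r l' (dual_weights w i) \<ge> 0" using l1 sw_hi by metis
        ultimately show ?thesis by (simp add: dotv_dual)
      qed
      from l2 obtain i where i: "i \<in> S' \<union> (\<lambda>i. i + n) ` S'" "dotv r l' (sum_weights n w i) > 0" by blast
      show False
      proof (cases "i \<in> S'")
        case True
        hence "i < n" using S'n by blast
        thus False using i z[OF True] sw_lo by simp
      next
        case False
        then obtain i' where "i' \<in> S'" "i = i' + n" using i by blast
        thus False using i z sw_hi dotv_dual by simp
      qed
    qed
    have ncx: "\<not> CLOSEDW r w S'"
    proof -
      have "i0 \<in> S'" using i0 unfolding S'_def by simp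
      moreover have "\<forall>i\<in>S'. dotv r l (w i) > 0" using l S'S by blast
      ultimately show ?thesis unfolding CLOSEDW_def by (meson less_imp_le)
    qed
    define Orb where "Orb = torbit (2 * n) r (sum_weights n w) (pair_vec n x y)"
    have "zariski_closed (2 * n) Orb" unfolding Orb_def using cpi[OF xa ya] pc sx sy by simp
    hence inL: "Orb \<in> ?L" using mz unfolding Orb_def by blast
    have "Orb \<notin> ?R"
    proof
      assume "Orb \<in> ?R"
      then obtain x' y' where xy': "Orb = torbit (2 * n) r (sum_weights n w) (pair_vec n x' y')"
        "(x', y') \<in> moment_zero n r w" "zariski_closed n (torbit n r w x')" by blast
      have a': "x' \<in> aspace n" "y' \<in> aspace n" using mz_aspace[OF xy'(2)] by auto
      have "pair_vec n x y \<in> Orb" unfolding Orb_def by (rule self_torbit[OF pair_aspace[OF xa ya]])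
      hence "suppv (2 * n) (pair_vec n x y) = suppv (2 * n) (pair_vec n x' y')"
        using torbit_supp xy'(1) by metis
      hence "S' \<union> (\<lambda>i. i + n) ` S' = suppv n x' \<union> (\<lambda>i. i + n) ` suppv n y'"
        using pair_supp[OF xa ya] pair_supp[OF a'] sx sy by simp
      hence "(S' \<union> (\<lambda>i. i + n) ` S') \<inter> {..<n} = (suppv n x' \<union> (\<lambda>i. i + n) ` suppv n y') \<inter> {..<n}" by simp
      hence "S' = suppv n x'" using supp_lo[OF S'n] supp_lo[OF suppv_sub] by metis
      hence "CLOSEDW r w S'" using cxi[OF a'(1)] xy'(3) by simp
      thus False using ncx by simp
    qed
    thus ?thesis using inL by blast
  qed
  show ?thesis using vis RL LR NV by blast
qed

end
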